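(* Let $\mathcal{M}=\{T_1,\ldots,T_m\}$ be a multiset of primitive strings, each of length at least $2$, with total length $N$. Let $a,b\in\{1,\ldots,m\}$ and positions $i$ of $T_a$ and $j$ of $T_b$. Let $U$ be the LMS-prefix of $\mathrm{conj}_i(T_a)$, with $i'$ the (LMS) position of $T_a$ at which $U$ ends, and let $V$ be the LMS-prefix of $\mathrm{conj}_j(T_b)$, with $j'$ the position of $T_b$ at which $V$ ends. Run the procedure Induced Sorting (described in the context) with some initial order of the LMS positions, and let $k_1$ and $k_2$ be the positions of $(i,a)$ and $(j,b)$, respectively, in the array $A$ at the end of the procedure. Then: (1) if $U<_{LMS}V$, then $k_1<k_2$; (2) if $U=V$, then $k_1<k_2$ if and only if $(i',a)$ was placed before $(j',b)$ in $A$ at the start of the procedure.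
   Context: For $T=T[1..n]$, $\mathrm{conj}_i(T)=T[i..n]T[1..i-1]$. Strings are viewed cyclically. For a primitive string $T$ of length $\ge2$, position $i$ is of type S if $\mathrm{conj}_i(T)<_{\mathrm{lex}}\mathrm{conj}_{i+1}(T)$ and of type L otherwise ($>_{\mathrm{lex}}$); an S-type position $i$ is LMS if $i-1$ (cyclically) is L-type. The LMS-prefix of $\mathrm{conj}_i(T)$ is the cyclic substring of $T$ from position $i$ to the first LMS position strictly after $i$ (cyclically; if $i$ is the only LMS position this wraps around to $i$ again). LMS-order: for LMS-prefixes $U,V$, $U<_{LMS}V$ if $V$ is a proper prefix of $U$, or neither is a prefix of the other and $U<_{\mathrm{lex}}V$. Procedure Induced Sorting: $A[1..N]$ is an array of entries $(j,d)$ (standing for $\mathrm{conj}_j(T_d)$), divided into consecutive buckets, one per character $c$ in increasing character order, the bucket of $c$ having size equal to the total number of occurrences of $c$ in the strings of $\mathcal{M}$. (1) Given an order of all LMS positions $(j,d)$, place them at the end of their buckets (bucket of $T_d[j]$), preserving the given order within each bucket; set the head pointer of each bucket to its first position. (2) Scan $A$ left to right; for each nonempty entry $(j,d)$ such that position $j-1$ of $T_d$ is L-type, write $(j-1,d)$ at the head of the bucket of $T_d[j-1]$ and increment that head. (3) Set the tail pointer of each bucket to its last position; scan $A$ right to left; for each nonempty entry $(j,d)$ such that position $j-1$ of $T_d$ is S-type, write $(j-1,d)$ at the tail of the bucket of $T_d[j-1]$ (overwriting) and decrement that tail. *)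

theory Defs
  imports Main "HOL-Library.Sublist"
begin

(* Conventions: strings are lists over a linearly ordered alphabet 'a;
   positions are 0-based (position p of T means T ! p, p < length T). *)

definition primitive :: "'a list \<Rightarrow> bool" where
  "primitive T \<longleftrightarrow> T \<noteq> [] \<and> \<not> (\<exists>u k. k \<ge> 2 \<and> T = concat (replicate k u))"

(* conj_i(T) = T[i..n] T[1..i-1]  (0-based: drop i T @ take i T) *)
definition conj :: "'a list \<Rightarrow> nat \<Rightarrow> 'a list" where
  "conj T i = drop i T @ take i T"

definition nxt :: "'a list \<Rightarrow> nat \<Rightarrow> nat" where
  "nxt T i = (i + 1) mod length T"

definition prv :: "'a list \<Rightarrow> nat \<Rightarrow> nat" where
  "prv T i = (i + length T - 1) mod length T"

definition is_S :: "'a::linorder list \<Rightarrow> nat \<Rightarrow> bool" where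
  "is_S T i \<longleftrightarrow> ord_class.lexordp (conj T i) (conj T (nxt T i))"

definition is_L :: "'a::linorder list \<Rightarrow> nat \<Rightarrow> bool" where
  "is_L T i \<longleftrightarrow> ord_class.lexordp (conj T (nxt T i)) (conj T i)"

definition is_LMS :: "'a::linorder list \<Rightarrow> nat \<Rightarrow> bool" where
  "is_LMS T i \<longleftrightarrow> is_S T i \<and> is_L T (prv T i)"

(* distance from i to the first LMS position strictly after i (cyclically);
   equals length T if i is the only LMS position *)
definition lms_dist :: "'a::linorder list \<Rightarrow> nat \<Rightarrow> nat" where
  "lms_dist T i = (LEAST d. 0 < d \<and> is_LMS T ((i + d) mod length T))"

definition lms_end :: "'a::linorder list \<Rightarrow> nat \<Rightarrow> nat" where
  "lms_end T i = (i + lms_dist T i) mod length T"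

definition lms_prefix :: "'a::linorder list \<Rightarrow> nat \<Rightarrow> 'a list" where
  "lms_prefix T i = map (\<lambda>k. T ! ((i + k) mod length T)) [0..<lms_dist T i + 1]"

definition lms_less :: "'a::linorder list \<Rightarrow> 'a list \<Rightarrow> bool" where
  "lms_less U V \<longleftrightarrow> strict_prefix V U \<or>
     (\<not> prefix U V \<and> \<not> prefix V U \<and> ord_class.lexordp U V)"

definition total_len :: "'a list list \<Rightarrow> nat" where
  "total_len Ts = sum_list (map length Ts)"

(* first index of the bucket of c *)
definition bstart :: "'a::linorder list list \<Rightarrow> 'a \<Rightarrow> nat" where
  "bstart Ts c = sum_list (map (\<lambda>T. length (filter (\<lambda>x. x < c) T)) Ts)"

(* one past the last index of the bucket of c *)
definition bend :: "'a::linorder list list \<Rightarrow> 'a \<Rightarrow> nat" where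
  "bend Ts c = sum_list (map (\<lambda>T. length (filter (\<lambda>x. x \<le> c) T)) Ts)"

type_synonym arr = "(nat \<times> nat) option list"

(* Step 1: place LMS positions at the ends of their buckets, preserving the
   given order within each bucket.  Implemented by processing the given order
   from its last element backwards with (exclusive) tail pointers. *)
definition step1_put :: "'a::linorder list list \<Rightarrow> arr \<times> ('a \<Rightarrow> nat) \<Rightarrow> nat \<times> nat \<Rightarrow> arr \<times> ('a \<Rightarrow> nat)" where
  "step1_put Ts st x = (case st of (A, tp) \<Rightarrow> (case x of (j, d) \<Rightarrow>
      let c = Ts ! d ! j in (A[tp c - 1 := Some (j, d)], tp(c := tp c - 1))))"

definition step1 :: "'a::linorder list list \<Rightarrow> (nat \<times> nat) list \<Rightarrow> arr" where
  "step1 Ts ord = fst (foldl (step1_put Ts) (replicate (total_len Ts) None, bend Ts) (rev ord))"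

definition step2_at :: "'a::linorder list list \<Rightarrow> arr \<times> ('a \<Rightarrow> nat) \<Rightarrow> nat \<Rightarrow> arr \<times> ('a \<Rightarrow> nat)" where
  "step2_at Ts st p = (case st of (A, hp) \<Rightarrow> (case A ! p of
      None \<Rightarrow> (A, hp)
    | Some (j, d) \<Rightarrow> (let j' = prv (Ts ! d) j; c = Ts ! d ! j' in
        if is_L (Ts ! d) j' then (A[hp c := Some (j', d)], hp(c := hp c + 1)) else (A, hp))))"

definition step2 :: "'a::linorder list list \<Rightarrow> arr \<Rightarrow> arr" where
  "step2 Ts A = fst (foldl (step2_at Ts) (A, bstart Ts) [0..<total_len Ts])"

(* Step 3: right-to-left scan inducing S-type positions (overwriting);
   tail pointers are kept exclusive: the tail position of bucket c is tp c - 1 *)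
definition step3_at :: "'a::linorder list list \<Rightarrow> arr \<times> ('a \<Rightarrow> nat) \<Rightarrow> nat \<Rightarrow> arr \<times> ('a \<Rightarrow> nat)" where
  "step3_at Ts st p = (case st of (A, tp) \<Rightarrow> (case A ! p of
      None \<Rightarrow> (A, tp)
    | Some (j, d) \<Rightarrow> (let j' = prv (Ts ! d) j; c = Ts ! d ! j' in
        if is_S (Ts ! d) j' then (A[tp c - 1 := Some (j', d)], tp(c := tp c - 1)) else (A, tp))))"

definition step3 :: "'a::linorder list list \<Rightarrow> arr \<Rightarrow> arr" where
  "step3 Ts A = fst (foldl (step3_at Ts) (A, bend Ts) (rev [0..<total_len Ts]))"

definition induced_sort :: "'a::linorder list list \<Rightarrow> (nat \<times> nat) list \<Rightarrow> arr" where
  "induced_sort Ts ord = step3 Ts (step2 Ts (step1 Ts ord))"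

definition lms_positions :: "'a::linorder list list \<Rightarrow> (nat \<times> nat) set" where
  "lms_positions Ts = {(j, d). d < length Ts \<and> j < length (Ts ! d) \<and> is_LMS (Ts ! d) j}"

end

theory Submission
  imports Defs "HOL-Library.Product_Lexorder"
begin



definition SS :: "'a::linorder list \<Rightarrow> nat \<Rightarrow> bool" where
  "SS T i \<longleftrightarrow> ord_class.lexordp (rotate i T) (rotate (Suc i) T)"
definition LL :: "'a::linorder list \<Rightarrow> nat \<Rightarrow> bool" where
  "LL T i \<longleftrightarrow> ord_class.lexordp (rotate (Suc i) T) (rotate i T)"

lemma concat_rep1: "concat (replicate k [x]) = replicate k x"
  by (induct k) auto

lemma prim_nonconst:
  assumes "primitive T" "length T \<ge> 2"
  shows "\<exists>k<length T. T ! k \<noteq> T ! (Suc k mod length T)"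
proof (rule ccontr)
  assume "\<not> ?thesis"
  hence h: "\<And>k. k < length T \<Longrightarrow> T ! k = T ! (Suc k mod length T)" by auto
  have c: "T ! k = T ! 0" if "k < length T" for k
    using that
  proof (induct k)
    case (Suc k)
    then have "T ! k = T ! (Suc k mod length T)" using h[of k] by simp
    with Suc show ?case by simp
  qed simp
  have "T = replicate (length T) (T ! 0)"
    by (rule nth_equalityI) (simp_all add: c)
  hence e: "T = concat (replicate (length T) [T ! 0])" by (simp add: concat_rep1)
  have "\<exists>u k. k \<ge> 2 \<and> T = concat (replicate k u)"
    using e assms(2) by blast
  with assms(1) show False unfolding primitive_def by simp
qed

lemma rot_neq:
  assumes "primitive T" "length T \<ge> 2"
  shows "rotate i T \<noteq> rotate (Suc i) T"
proof
  assume e: "rotate i T = rotate (Suc i) T"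
  define n where "n = length T"
  define m where "m = n - i mod n"
  have np: "n > 0" using assms n_def by auto
  have "rotate m (rotate i T) = rotate m (rotate (Suc i) T)" using e by simp
  hence "rotate (m + i) T = rotate (Suc (m + i)) T" unfolding rotate_rotate by simp
  moreover have "(m + i) mod n = 0"
  proof -
    have "i mod n < n" using np by simp
    hence "m + i mod n = n" unfolding m_def by simp
    hence "(m + i mod n) mod n = 0" by simp
    thus ?thesis by (simp add: mod_add_right_eq)
  qed
  ultimately have r: "rotate 1 T = T"
  proof -
    assume a: "rotate (m + i) T = rotate (Suc (m + i)) T" and b: "(m + i) mod n = 0"
    have "rotate (m + i) T = rotate ((m + i) mod n) T" using rotate_conv_mod[of "m+i" T] n_def by simp
    also have "\<dots> = T" using b by simp
    finally have 1: "rotate (m + i) T = T" .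
    have "rotate (Suc (m + i)) T = rotate (Suc (m + i) mod n) T" using rotate_conv_mod[of "Suc (m+i)" T] n_def by simp
    also have "Suc (m + i) mod n = Suc ((m + i) mod n) mod n" by (simp add: mod_Suc_eq)
    also have "\<dots> = Suc 0 mod n" using b by simp
    also have "rotate (Suc 0 mod n) T = rotate 1 T" using rotate_conv_mod[of "Suc 0" T] n_def by simp
    finally have 2: "rotate (Suc (m + i)) T = rotate 1 T" .
    show ?thesis using a 1 2 by metis
  qed
  have "\<forall>k<n. T ! k = T ! (Suc k mod n)"
  proof (intro allI impI)
    fix k assume "k < n"
    hence "rotate 1 T ! k = T ! ((1 + k) mod n)" using nth_rotate[of k T 1] n_def by simp
    thus "T ! k = T ! (Suc k mod n)" using r by simp
  qed
  with prim_nonconst[OF assms] n_def show False by auto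
qed

lemma lexordp_app_same_len:
  fixes u :: "'a::linorder list"
  shows "length u = length u' \<Longrightarrow> u \<noteq> u' \<Longrightarrow>
    ord_class.lexordp (u @ z) (u' @ z') \<longleftrightarrow> ord_class.lexordp u u'"
proof (induct u arbitrary: u')
  case Nil then show ?case by simp
next
  case (Cons a u)
  then obtain b v where u': "u' = b # v" by (cases u') auto
  show ?case
  proof (cases "a = b")
    case True
    with Cons u' show ?thesis by auto
  next
    case False
    with u' show ?thesis by auto
  qed
qed

lemma SS_LL:
  assumes "primitive T" "length T \<ge> 2"
  shows "LL T i \<longleftrightarrow> \<not> SS T i"
  using rot_neq[OF assms, of i] lexordp_linear[of "rotate i T" "rotate (Suc i) T"]
    lexordp_antisym[of "rotate i T" "rotate (Suc i) T"]
  unfolding SS_def LL_def by blast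

lemma rot_split:
  assumes "length T \<ge> 2"
  shows "\<exists>v. rotate i T = T ! (i mod length T) # T ! (Suc i mod length T) # v
          \<and> rotate (Suc i) T = T ! (Suc i mod length T) # v @ [T ! (i mod length T)]
          \<and> rotate (Suc (Suc i)) T = v @ [T ! (i mod length T), T ! (Suc i mod length T)]"
proof -
  define R where "R = rotate i T"
  have lR: "length R = length T" by (simp add: R_def)
  have Tne: "T \<noteq> []" "0 < length T" "1 < length T" using assms by auto
  obtain x y v where R: "R = x # y # v" using assms lR
    by (metis Suc_le_length_iff numeral_2_eq_2)
  have "x = R ! 0" using R by simp
  also have "\<dots> = T ! (i mod length T)" unfolding R_def using Tne nth_rotate[of 0 T i] by simp
  finally have x: "x = T ! (i mod length T)" .
  have "y = R ! 1" using R by simp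
  also have "\<dots> = T ! (Suc i mod length T)" unfolding R_def using Tne nth_rotate[of 1 T i] by simp
  finally have y: "y = T ! (Suc i mod length T)" .
  have r1: "rotate (Suc i) T = rotate1 R" unfolding R_def by (simp add: rotate_def)
  have r2: "rotate (Suc (Suc i)) T = rotate1 (rotate1 R)" unfolding R_def by (simp add: rotate_def)
  show ?thesis using R r1 r2 x y R_def by (intro exI[of _ v]) auto
qed

lemma SS_step:
  assumes "primitive T" "length T \<ge> 2"
  shows "T ! (i mod length T) < T ! (Suc i mod length T) \<Longrightarrow> SS T i"
    and "T ! (i mod length T) > T ! (Suc i mod length T) \<Longrightarrow> \<not> SS T i"
    and "T ! (i mod length T) = T ! (Suc i mod length T) \<Longrightarrow> SS T i \<longleftrightarrow> SS T (Suc i)"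
proof -
  obtain v where v: "rotate i T = T ! (i mod length T) # T ! (Suc i mod length T) # v"
    "rotate (Suc i) T = T ! (Suc i mod length T) # v @ [T ! (i mod length T)]"
    "rotate (Suc (Suc i)) T = v @ [T ! (i mod length T), T ! (Suc i mod length T)]"
    using rot_split[OF assms(2)] by blast
  show "T ! (i mod length T) < T ! (Suc i mod length T) \<Longrightarrow> SS T i"
    unfolding SS_def using v by simp
  show "T ! (i mod length T) > T ! (Suc i mod length T) \<Longrightarrow> \<not> SS T i"
    unfolding SS_def using v by simp
  assume e: "T ! (i mod length T) = T ! (Suc i mod length T)"
  define x where "x = T ! (i mod length T)"
  have v': "rotate i T = x # x # v" "rotate (Suc i) T = x # v @ [x]"
    "rotate (Suc (Suc i)) T = v @ [x, x]" using v e x_def by auto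
  have ne: "x # v \<noteq> v @ [x]"
  proof
    assume "x # v = v @ [x]"
    hence "rotate (Suc i) T = rotate (Suc (Suc i)) T" using v' by (metis append.assoc append_Cons append_Nil)
    thus False using rot_neq[OF assms] by blast
  qed
  have "SS T i \<longleftrightarrow> ord_class.lexordp (x # v) (v @ [x])" unfolding SS_def using v' by simp
  also have "\<dots> \<longleftrightarrow> ord_class.lexordp ((x # v) @ [x]) ((v @ [x]) @ [x])"
    using lexordp_app_same_len[of "x # v" "v @ [x]"] ne by simp
  also have "\<dots> \<longleftrightarrow> SS T (Suc i)" unfolding SS_def using v' by simp
  finally show "SS T i \<longleftrightarrow> SS T (Suc i)" .
qed

lemma SS_mod: "length T > 0 \<Longrightarrow> SS T (i mod length T) = SS T i"
proof -
  assume n: "length T > 0"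
  have 1: "rotate (i mod length T) T = rotate i T" using rotate_conv_mod[of i T] by simp
  have "rotate (Suc (i mod length T)) T = rotate (Suc (i mod length T) mod length T) T"
    using rotate_conv_mod[of "Suc (i mod length T)" T] by simp
  also have "Suc (i mod length T) mod length T = Suc i mod length T" by (simp add: mod_Suc_eq)
  also have "rotate (Suc i mod length T) T = rotate (Suc i) T" using rotate_conv_mod[of "Suc i" T] by simp
  finally show ?thesis unfolding SS_def using 1 by simp
qed

lemma conj_rot: "i < length T \<Longrightarrow> conj T i = rotate i T"
  unfolding conj_def by (simp add: rotate_drop_take)

lemma conj_nxt: "i < length T \<Longrightarrow> conj T (nxt T i) = rotate (Suc i) T"
proof -
  assume "i < length T"
  hence "length T > 0" by (cases T) auto
  hence "(i+1) mod length T < length T" by simp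
  hence "conj T (nxt T i) = rotate ((Suc i) mod length T) T" unfolding nxt_def using conj_rot by simp
  also have "\<dots> = rotate (Suc i) T" using rotate_conv_mod[of "Suc i" T] by simp
  finally show ?thesis .
qed

lemma is_S_SS: assumes "i < length T" shows "is_S T i \<longleftrightarrow> SS T i"
  unfolding is_S_def SS_def using conj_rot[OF assms] conj_nxt[OF assms] by simp

lemma is_L_LL: assumes "i < length T" shows "is_L T i \<longleftrightarrow> LL T i"
  unfolding is_L_def LL_def using conj_rot[OF assms] conj_nxt[OF assms] by simp




lemma SS_cong: "length T > 0 \<Longrightarrow> a mod length T = b mod length T \<Longrightarrow> SS T a = SS T b"
  by (metis SS_mod)

lemma chain_eq:
  fixes T :: "'a::linorder list"
  assumes n: "length T > 0" and h: "\<forall>j<length T. T ! j \<le> T ! (Suc j mod length T)"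
  shows "\<forall>j<length T. T ! j = T ! 0"
proof -
  have up: "T ! 0 \<le> T ! j" if "j < length T" for j
    using that
  proof (induct j)
    case (Suc j)
    then have "T ! j \<le> T ! (Suc j mod length T)" using h[rule_format, of j] by simp
    moreover have "Suc j mod length T = Suc j" using Suc(2) by simp
    ultimately show ?case using Suc by simp
  qed simp
  have down: "T ! j \<le> T ! (length T - 1)" if "j < length T" for j
  proof -
    have "\<forall>k. j + k < length T \<longrightarrow> T ! j \<le> T ! (j + k)"
    proof
      fix k show "j + k < length T \<longrightarrow> T ! j \<le> T ! (j + k)"
      proof (induct k)
        case (Suc k)
        show ?case
        proof
          assume a: "j + Suc k < length T"
          hence "T ! (j + k) \<le> T ! (Suc (j + k) mod length T)" using h[rule_format, of "j+k"] by simp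
          with Suc a show "T ! j \<le> T ! (j + Suc k)" by simp
        qed
      qed simp
    qed
    from this[rule_format, of "length T - 1 - j"] that show ?thesis by simp
  qed
  have "T ! (length T - 1) \<le> T ! (Suc (length T - 1) mod length T)" using h[rule_format, of "length T - 1"] n by simp
  moreover have "Suc (length T - 1) mod length T = 0" using n by simp
  ultimately have "T ! (length T - 1) \<le> T ! 0" by simp
  thus ?thesis using up down by (meson order_antisym order_trans)
qed

lemma chain_eq':
  fixes T :: "'a::linorder list"
  assumes n: "length T > 0" and h: "\<forall>j<length T. T ! j \<ge> T ! (Suc j mod length T)"
  shows "\<forall>j<length T. T ! j = T ! 0"
proof -
  have up: "T ! 0 \<ge> T ! j" if "j < length T" for j
    using that
  proof (induct j)
    case (Suc j)
    then have "T ! j \<ge> T ! (Suc j mod length T)" using h[rule_format, of j] by simp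
    moreover have "Suc j mod length T = Suc j" using Suc(2) by simp
    ultimately show ?case using Suc by simp
  qed simp
  have down: "T ! j \<ge> T ! (length T - 1)" if "j < length T" for j
  proof -
    have "\<forall>k. j + k < length T \<longrightarrow> T ! j \<ge> T ! (j + k)"
    proof
      fix k show "j + k < length T \<longrightarrow> T ! j \<ge> T ! (j + k)"
      proof (induct k)
        case (Suc k)
        show ?case
        proof
          assume a: "j + Suc k < length T"
          hence "T ! (j + k) \<ge> T ! (Suc (j + k) mod length T)" using h[rule_format, of "j+k"] by simp
          with Suc a show "T ! j \<ge> T ! (j + Suc k)" by simp
        qed
      qed simp
    qed
    from this[rule_format, of "length T - 1 - j"] that show ?thesis by simp
  qed
  have "T ! (length T - 1) \<ge> T ! (Suc (length T - 1) mod length T)" using h[rule_format, of "length T - 1"] n by simp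
  moreover have "Suc (length T - 1) mod length T = 0" using n by simp
  ultimately have "T ! (length T - 1) \<ge> T ! 0" by simp
  thus ?thesis using up down by (meson order_antisym order_trans)
qed

lemma exists_S_L:
  fixes T :: "'a::linorder list"
  assumes p: "primitive T" "length T \<ge> 2"
  shows "\<exists>s<length T. SS T s" and "\<exists>l<length T. \<not> SS T l"
proof -
  have n: "length T > 0" using p by (cases T) auto
  obtain k where k: "k < length T" "T ! k \<noteq> T ! (Suc k mod length T)" using prim_nonconst[OF p] by blast
  show "\<exists>s<length T. SS T s"
  proof (rule ccontr)
    assume "\<not> ?thesis"
    hence "\<forall>j<length T. \<not> SS T j" by auto
    hence "\<forall>j<length T. T ! j \<ge> T ! (Suc j mod length T)"
      using SS_step(1)[OF p] by (metis mod_less not_le)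
    from chain_eq'[OF n this] k show False
      by (metis mod_less_divisor n)
  qed
  show "\<exists>l<length T. \<not> SS T l"
  proof (rule ccontr)
    assume "\<not> ?thesis"
    hence "\<forall>j<length T. SS T j" by auto
    hence "\<forall>j<length T. T ! j \<le> T ! (Suc j mod length T)"
      using SS_step(2)[OF p] by (metis mod_less not_le)
    from chain_eq[OF n this] k show False
      by (metis mod_less_divisor n)
  qed
qed

lemma is_LMS_SS:
  fixes T :: "'a::linorder list"
  assumes p: "primitive T" "length T \<ge> 2" and i: "i < length T"
  shows "is_LMS T i \<longleftrightarrow> SS T i \<and> \<not> SS T (i + length T - 1)"
proof -
  have n: "length T > 0" using i by (cases T) auto
  have pv: "prv T i < length T" unfolding prv_def using n by simp
  have "is_L T (prv T i) \<longleftrightarrow> \<not> SS T (prv T i)"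
    using is_L_LL[OF pv] SS_LL[OF p] by simp
  also have "SS T (prv T i) \<longleftrightarrow> SS T (i + length T - 1)"
    unfolding prv_def using SS_mod[OF n] by simp
  finally show ?thesis unfolding is_LMS_def using is_S_SS[OF i] by simp
qed

lemma exists_LMS:
  fixes T :: "'a::linorder list"
  assumes p: "primitive T" "length T \<ge> 2"
  shows "\<exists>q<length T. is_LMS T q"
proof -
  have n: "length T > 0" using p by (cases T) auto
  obtain l where l: "l < length T" "\<not> SS T l" using exists_S_L(2)[OF p] by blast
  obtain s where s: "s < length T" "SS T s" using exists_S_L(1)[OF p] by blast
  have "SS T (l + (s + length T - l))"
  proof -
    have "l + (s + length T - l) = s + length T" using l by simp
    moreover have "(s + length T) mod length T = s mod length T" by simp
    ultimately show ?thesis using SS_cong[OF n] s(2) by metis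
  qed
  hence ex: "\<exists>d. SS T (l + d)" by blast
  define d0 where "d0 = (LEAST d. SS T (l + d))"
  have d0: "SS T (l + d0)" unfolding d0_def using LeastI_ex[OF ex] .
  have "d0 \<noteq> 0"
  proof
    assume "d0 = 0" with d0 l show False by simp
  qed
  then obtain e where e: "d0 = Suc e" by (cases d0) auto
  have ne: "\<not> SS T (l + e)"
  proof
    assume "SS T (l + e)"
    hence "d0 \<le> e" unfolding d0_def by (rule Least_le)
    with e show False by simp
  qed
  define q where "q = (l + d0) mod length T"
  have q: "q < length T" unfolding q_def using n by simp
  have "SS T q" unfolding q_def using SS_mod[OF n] d0 by simp
  moreover have "\<not> SS T (q + length T - 1)"
  proof -
    have "(q + length T - 1) mod length T = (l + e) mod length T"
    proof -
      have "q + length T - 1 = q + (length T - 1)" using n by linarith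
      hence "(q + length T - 1) mod length T = ((l + d0) + (length T - 1)) mod length T"
        unfolding q_def by (simp add: mod_add_left_eq)
      also have "(l + d0) + (length T - 1) = (l + e) + length T" using e n by simp
      finally show ?thesis by simp
    qed
    thus ?thesis using SS_cong[OF n] ne by metis
  qed
  ultimately show ?thesis using is_LMS_SS[OF p q] q by blast
qed




lemma nxt_lt: "i < length T \<Longrightarrow> nxt T i < length T"
  unfolding nxt_def by (cases T) auto

lemma prv_lt: "i < length T \<Longrightarrow> prv T i < length T"
  unfolding prv_def by (cases T) auto

lemma lms_ex_d:
  fixes T :: "'a::linorder list"
  assumes p: "primitive T" "length T \<ge> 2" and i: "i < length T"
  shows "\<exists>d. 0 < d \<and> is_LMS T ((i + d) mod length T)"
proof -
  obtain q where q: "q < length T" "is_LMS T q" using exists_LMS[OF p] by blast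
  show ?thesis
  proof (cases "i < q")
    case True
    then show ?thesis using q by (intro exI[of _ "q - i"]) simp
  next
    case False
    have "(i + (q + length T - i)) mod length T = q" using False q i by simp
    then show ?thesis using q i by (intro exI[of _ "q + length T - i"]) simp
  qed
qed

lemma lms_dist_props:
  fixes T :: "'a::linorder list"
  assumes p: "primitive T" "length T \<ge> 2" and i: "i < length T"
  shows "0 < lms_dist T i" "is_LMS T (lms_end T i)"
proof -
  have "0 < lms_dist T i \<and> is_LMS T ((i + lms_dist T i) mod length T)"
    unfolding lms_dist_def using LeastI_ex[OF lms_ex_d[OF p i]] .
  thus "0 < lms_dist T i" "is_LMS T (lms_end T i)" unfolding lms_end_def by auto
qed

lemma lms_dist_1:
  fixes T :: "'a::linorder list"
  assumes "is_LMS T (nxt T i)"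
  shows "lms_dist T i = 1"
  unfolding lms_dist_def
proof (rule Least_equality)
  show "0 < (1::nat) \<and> is_LMS T ((i + 1) mod length T)" using assms unfolding nxt_def by simp
  show "\<And>y. 0 < y \<and> is_LMS T ((i + y) mod length T) \<Longrightarrow> 1 \<le> y" by simp
qed

lemma lms_dist_Suc:
  fixes T :: "'a::linorder list"
  assumes p: "primitive T" "length T \<ge> 2" and i: "i < length T" and nl: "\<not> is_LMS T (nxt T i)"
  shows "lms_dist T i = Suc (lms_dist T (nxt T i))"
proof -
  have ni: "nxt T i < length T" using nxt_lt[OF i] .
  have md: "(nxt T i + d) mod length T = (i + Suc d) mod length T" for d
    unfolding nxt_def by (simp add: mod_add_left_eq)
  have D': "0 < lms_dist T (nxt T i)" "is_LMS T ((i + Suc (lms_dist T (nxt T i))) mod length T)"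
    using lms_dist_props[OF p ni] unfolding lms_end_def md by auto
  show ?thesis unfolding lms_dist_def[of T i]
  proof (rule Least_equality)
    show "0 < Suc (lms_dist T (nxt T i)) \<and> is_LMS T ((i + Suc (lms_dist T (nxt T i))) mod length T)"
      using D' by simp
    fix y assume y: "0 < y \<and> is_LMS T ((i + y) mod length T)"
    have "y \<noteq> 1" using y nl unfolding nxt_def by auto
    then obtain z where z: "y = Suc z" "0 < z" using y by (cases y) auto
    have "0 < z \<and> is_LMS T ((nxt T i + z) mod length T)" using z y md by simp
    hence "lms_dist T (nxt T i) \<le> z" unfolding lms_dist_def by (rule Least_le)
    thus "Suc (lms_dist T (nxt T i)) \<le> y" using z by simp
  qed
qed

lemma lms_end_1:
  assumes l: "is_LMS T (nxt T i)" shows "lms_end T i = nxt T i"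
  unfolding lms_end_def lms_dist_1[OF l] nxt_def by simp

lemma lms_end_Suc:
  fixes T :: "'a::linorder list"
  assumes p: "primitive T" "length T \<ge> 2" and i: "i < length T" and nl: "\<not> is_LMS T (nxt T i)"
  shows "lms_end T i = lms_end T (nxt T i)"
  unfolding lms_end_def lms_dist_Suc[OF assms] unfolding nxt_def by (simp add: mod_add_left_eq)

lemma lms_prefix_1:
  fixes T :: "'a::linorder list"
  assumes i: "i < length T" and l: "is_LMS T (nxt T i)"
  shows "lms_prefix T i = [T ! i, T ! nxt T i]"
  unfolding lms_prefix_def lms_dist_1[OF l] using i by (simp add: nxt_def)

lemma lms_prefix_Suc:
  fixes T :: "'a::linorder list"
  assumes p: "primitive T" "length T \<ge> 2" and i: "i < length T" and nl: "\<not> is_LMS T (nxt T i)"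
  shows "lms_prefix T i = T ! i # lms_prefix T (nxt T i)"
proof -
  have md: "(nxt T i + d) mod length T = (i + Suc d) mod length T" for d
    unfolding nxt_def by (simp add: mod_add_left_eq)
  show ?thesis unfolding lms_prefix_def lms_dist_Suc[OF assms]
  proof (rule nth_equalityI)
    fix k assume "k < length (map (\<lambda>k. T ! ((i + k) mod length T)) [0..<Suc (lms_dist T (nxt T i)) + 1])"
    hence k: "k < Suc (Suc (lms_dist T (nxt T i)))" by simp
    show "map (\<lambda>k. T ! ((i + k) mod length T)) [0..<Suc (lms_dist T (nxt T i)) + 1] ! k =
      (T ! i # map (\<lambda>k. T ! ((nxt T i + k) mod length T)) [0..<lms_dist T (nxt T i) + 1]) ! k"
    proof (cases k)
      case 0 then show ?thesis using i by (simp del: upt_Suc)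
    next
      case (Suc k') then show ?thesis using k md by (simp del: upt_Suc)
    qed
  qed simp
qed

lemma lms_prefix_len: "length (lms_prefix T i) = Suc (lms_dist T i)"
  unfolding lms_prefix_def by simp




fun aft :: "'b list \<Rightarrow> 'b \<Rightarrow> 'b set" where
  "aft [] x = {}"
| "aft (y # ys) x = (if x = y then set ys else aft ys x)"

lemma aft_sub: "aft ys x \<subseteq> set ys"
  by (induct ys) auto

lemma aft_notin: "distinct ys \<Longrightarrow> x \<notin> aft ys x"
  by (induct ys) auto

lemma nxt_prv: "j < length T \<Longrightarrow> nxt T (prv T j) = j"
proof -
  assume j: "j < length T"
  hence n: "length T > 0" by (cases T) auto
  have "nxt T (prv T j) = ((j + length T - 1) mod length T + 1) mod length T"
    unfolding nxt_def prv_def by simp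
  also have "\<dots> = (j + length T - 1 + 1) mod length T" by (simp add: mod_Suc_eq)
  also have "j + length T - 1 + 1 = j + length T" using n by simp
  finally show ?thesis using j by simp
qed

lemma prv_nxt: "j < length T \<Longrightarrow> prv T (nxt T j) = j"
proof -
  assume j: "j < length T"
  hence n: "length T > 0" by (cases T) auto
  have "(j + 1) mod length T + length T - 1 = (j + 1) mod length T + (length T - 1)" using n by linarith
  hence "prv T (nxt T j) = ((j + 1) mod length T + (length T - 1)) mod length T"
    unfolding nxt_def prv_def by simp
  also have "\<dots> = (j + 1 + (length T - 1)) mod length T" by (simp add: mod_add_left_eq)
  also have "j + 1 + (length T - 1) = j + length T" using n by simp
  finally show ?thesis using j by simp
qed

lemma mod_cancel_nat:
  assumes e: "(j + a) mod (n::nat) = (j' + a) mod n" shows "j mod n = j' mod n"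
proof (cases "n = 0")
  case True thus ?thesis using e by simp
next
  case False
  have le: "a \<le> n * a" using False by simp
  have "(j + a + (n * a - a)) mod n = ((j + a) mod n + (n * a - a)) mod n" by (simp add: mod_add_left_eq)
  also have "\<dots> = ((j' + a) mod n + (n * a - a)) mod n" using e by simp
  also have "\<dots> = (j' + a + (n * a - a)) mod n" by (simp add: mod_add_left_eq)
  finally have "(j + n * a) mod n = (j' + n * a) mod n" using le by simp
  thus ?thesis by simp
qed

locale IS =
  fixes Ts :: "'a::linorder list list" and ord :: "(nat \<times> nat) list"
  assumes prim: "\<forall>T \<in> set Ts. primitive T \<and> length T \<ge> 2"
    and ord_dist: "distinct ord" and ord_set: "set ord = lms_positions Ts"
begin

definition Pos :: "(nat \<times> nat) set" where "Pos = {(j, d). d < length Ts \<and> j < length (Ts ! d)}"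
definition ch :: "nat \<times> nat \<Rightarrow> 'a" where "ch x = Ts ! snd x ! fst x"
definition sc :: "nat \<times> nat \<Rightarrow> nat \<times> nat" where "sc x = (nxt (Ts ! snd x) (fst x), snd x)"
definition pr :: "nat \<times> nat \<Rightarrow> nat \<times> nat" where "pr x = (prv (Ts ! snd x) (fst x), snd x)"
definition Sp :: "nat \<times> nat \<Rightarrow> bool" where "Sp x = is_S (Ts ! snd x) (fst x)"
definition Lp :: "nat \<times> nat \<Rightarrow> bool" where "Lp x = is_L (Ts ! snd x) (fst x)"
definition Mp :: "nat \<times> nat \<Rightarrow> bool" where "Mp x = is_LMS (Ts ! snd x) (fst x)"
definition endp :: "nat \<times> nat \<Rightarrow> nat \<times> nat" where "endp x = (lms_end (Ts ! snd x) (fst x), snd x)"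
definition U :: "nat \<times> nat \<Rightarrow> 'a list" where "U x = lms_prefix (Ts ! snd x) (fst x)"
definition dst :: "nat \<times> nat \<Rightarrow> nat" where "dst x = lms_dist (Ts ! snd x) (fst x)"

lemma primT: "d < length Ts \<Longrightarrow> primitive (Ts ! d) \<and> 2 \<le> length (Ts ! d)"
  using prim by auto

lemma Pos_iff: "x \<in> Pos \<longleftrightarrow> snd x < length Ts \<and> fst x < length (Ts ! snd x)"
  unfolding Pos_def by (cases x) auto

lemma sc_Pos: "x \<in> Pos \<Longrightarrow> sc x \<in> Pos"
  unfolding Pos_iff sc_def by (simp add: nxt_lt)

lemma pr_Pos: "x \<in> Pos \<Longrightarrow> pr x \<in> Pos"
  unfolding Pos_iff pr_def by (simp add: prv_lt)

lemma sc_pr: "x \<in> Pos \<Longrightarrow> sc (pr x) = x"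
  unfolding Pos_iff sc_def pr_def by (simp add: nxt_prv)

lemma pr_sc: "x \<in> Pos \<Longrightarrow> pr (sc x) = x"
  unfolding Pos_iff sc_def pr_def by (simp add: prv_nxt)

lemma sc_inj: "x \<in> Pos \<Longrightarrow> y \<in> Pos \<Longrightarrow> sc x = sc y \<Longrightarrow> x = y"
  by (metis pr_sc)

lemma LS: "x \<in> Pos \<Longrightarrow> Lp x \<longleftrightarrow> \<not> Sp x"
  unfolding Pos_iff Lp_def Sp_def using is_L_LL is_S_SS SS_LL primT by metis

lemma F1:
  assumes x: "x \<in> Pos"
  shows "ch x < ch (sc x) \<Longrightarrow> Sp x"
    and "ch x > ch (sc x) \<Longrightarrow> Lp x"
    and "ch x = ch (sc x) \<Longrightarrow> Sp x \<longleftrightarrow> Sp (sc x)"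
proof -
  obtain j d where xd: "x = (j, d)" by (cases x)
  define T where "T = Ts ! d"
  have d: "d < length Ts" and j: "j < length T" using x unfolding Pos_iff xd T_def by auto
  have p: "primitive T" "2 \<le> length T" using primT[OF d] T_def by auto
  have n: "length T > 0" using j by (cases T) auto
  have jm: "j mod length T = j" using j by simp
  have chx: "ch x = T ! (j mod length T)" unfolding jm unfolding ch_def xd T_def by simp
  have chs: "ch (sc x) = T ! (Suc j mod length T)" unfolding ch_def sc_def xd T_def nxt_def by simp
  have Sx: "Sp x \<longleftrightarrow> SS T j" unfolding Sp_def xd T_def using is_S_SS j T_def by simp
  have Ssx: "Sp (sc x) \<longleftrightarrow> SS T (Suc j)"
  proof -
    have "Sp (sc x) \<longleftrightarrow> is_S T (Suc j mod length T)" unfolding Sp_def sc_def xd T_def nxt_def by simp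
    also have "\<dots> \<longleftrightarrow> SS T (Suc j mod length T)" using is_S_SS[of "Suc j mod length T" T] n by simp
    also have "\<dots> \<longleftrightarrow> SS T (Suc j)" using SS_mod[OF n] by simp
    finally show ?thesis .
  qed
  show "ch x < ch (sc x) \<Longrightarrow> Sp x" using SS_step(1)[OF p, of j] chx chs Sx by simp
  show "ch x > ch (sc x) \<Longrightarrow> Lp x" using SS_step(2)[OF p, of j] chx chs Sx LS[OF x] by simp
  show "ch x = ch (sc x) \<Longrightarrow> Sp x \<longleftrightarrow> Sp (sc x)" using SS_step(3)[OF p, of j] chx chs Sx Ssx by simp
qed

lemma Mp_def2: "Mp x \<longleftrightarrow> Sp x \<and> Lp (pr x)"
  unfolding Mp_def Sp_def Lp_def pr_def is_LMS_def by simp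

lemma Mp_S: "Mp x \<Longrightarrow> Sp x" unfolding Mp_def2 by simp

lemma Mp_sc: "x \<in> Pos \<Longrightarrow> Mp (sc x) \<Longrightarrow> Lp x"
  unfolding Mp_def2 using pr_sc by simp

lemma L_sc: "x \<in> Pos \<Longrightarrow> Lp x \<Longrightarrow> Lp (sc x) \<or> Mp (sc x)"
  unfolding Mp_def2 using pr_sc LS sc_Pos by metis

lemma S_sc_notM: "x \<in> Pos \<Longrightarrow> Sp x \<Longrightarrow> \<not> Mp (sc x)"
  using Mp_sc LS by blast

lemma dstx_Suc: "x \<in> Pos \<Longrightarrow> \<not> Mp (sc x) \<Longrightarrow> dst x = Suc (dst (sc x))"
  unfolding Pos_iff Mp_def dst_def sc_def
  using lms_dist_Suc[of "Ts ! snd x" "fst x"] primT[of "snd x"] by simp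

lemma endp_rec: "x \<in> Pos \<Longrightarrow> endp x = (if Mp (sc x) then sc x else endp (sc x))"
  unfolding Pos_iff Mp_def endp_def sc_def
  using lms_end_Suc[of "Ts ! snd x" "fst x"] lms_end_1[of "Ts ! snd x" "fst x"] primT[of "snd x"] by simp

lemma U_rec: "x \<in> Pos \<Longrightarrow> U x = ch x # (if Mp (sc x) then [ch (sc x)] else U (sc x))"
  unfolding Pos_iff Mp_def U_def sc_def ch_def
  using lms_prefix_Suc[of "Ts ! snd x" "fst x"] lms_prefix_1[of "fst x" "Ts ! snd x"] primT[of "snd x"] by simp

lemma endp_Pos: "x \<in> Pos \<Longrightarrow> endp x \<in> Pos"
  unfolding Pos_iff endp_def lms_end_def by (cases "Ts ! snd x") auto

lemma endp_M: "x \<in> Pos \<Longrightarrow> Mp (endp x)"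
  unfolding Pos_iff Mp_def endp_def using lms_dist_props(2)[of "Ts ! snd x" "fst x"] primT[of "snd x"] by simp

lemma lms_pos: "lms_positions Ts = {x \<in> Pos. Mp x}"
  unfolding lms_positions_def Pos_def Mp_def by auto

lemma ord_iff: "x \<in> set ord \<longleftrightarrow> x \<in> Pos \<and> Mp x"
  using ord_set lms_pos by auto

lemma last_U: "x \<in> Pos \<Longrightarrow> last (U x) = ch (endp x)"
  unfolding U_def lms_prefix_def endp_def lms_end_def ch_def Pos_iff by simp

lemma U_len: "length (U x) = Suc (dst x)"
  unfolding U_def dst_def by (simp add: lms_prefix_len)

lemma endp_U_inj:
  assumes x: "x \<in> Pos" and y: "y \<in> Pos" and e: "endp x = endp y" and u: "dst x = dst y"
  shows "x = y"
proof -
  obtain j d where xd: "x = (j, d)" by (cases x)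
  obtain j' d' where yd: "y = (j', d')" by (cases y)
  have dd: "d' = d" using e unfolding endp_def xd yd by simp
  have "(j + dst x) mod length (Ts ! d) = (j' + dst x) mod length (Ts ! d)"
    using e u unfolding endp_def xd yd dd lms_end_def dst_def by simp
  hence "j mod length (Ts ! d) = j' mod length (Ts ! d)" by (rule mod_cancel_nat)
  hence "j = j'" using x y unfolding xd yd dd Pos_iff by simp
  thus ?thesis using xd yd dd by simp
qed

end



lemma card_pairs:
  fixes m :: nat shows "finite {(j, d). d < m \<and> j < length (f d) \<and> Q (f d ! j)} \<and>
   card {(j, d). d < m \<and> j < length (f d) \<and> Q (f d ! j)} = (\<Sum>d<m. length (filter Q (f d)))"
proof (induct m)
  case 0 then show ?case by simp
next
  case (Suc m)
  define S where "S = {(j, d). d < m \<and> j < length (f d) \<and> Q (f d ! j)}"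
  define R where "R = {j. j < length (f m) \<and> Q (f m ! j)}"
  have eq: "{(j, d). d < Suc m \<and> j < length (f d) \<and> Q (f d ! j)} = S \<union> (\<lambda>j. (j, m)) ` R"
    unfolding S_def R_def by (auto simp: less_Suc_eq image_iff)
  have fR: "finite R" unfolding R_def by simp
  have dis: "S \<inter> (\<lambda>j. (j, m)) ` R = {}" unfolding S_def by auto
  have cR: "card ((\<lambda>j. (j, m)) ` R) = length (filter Q (f m))"
    unfolding R_def by (subst card_image) (auto simp: inj_on_def length_filter_conv_card)
  have fS: "finite S" "card S = (\<Sum>d<m. length (filter Q (f d)))" using Suc unfolding S_def by auto
  show ?case unfolding eq using fS fR dis cR by (simp add: card_Un_disjoint)
qed

context IS begin

lemma sum_list_nth: "sum_list (map g Ts) = (\<Sum>d<length Ts. g (Ts ! d))"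
  by (simp add: sum_list_sum_nth atLeast0LessThan)

lemma card_ch: "card {x \<in> Pos. Q (ch x)} = sum_list (map (\<lambda>T. length (filter Q T)) Ts)"
proof -
  have "{x \<in> Pos. Q (ch x)} = {(j, d). d < length Ts \<and> j < length (Ts ! d) \<and> Q (Ts ! d ! j)}"
    unfolding Pos_def ch_def by auto
  thus ?thesis using card_pairs[of "length Ts" "\<lambda>d. Ts ! d" Q] sum_list_nth[of "\<lambda>T. length (filter Q T)"] by simp
qed

lemma finite_Pos: "finite Pos"
proof -
  have "Pos = {(j, d). d < length Ts \<and> j < length (Ts ! d) \<and> (\<lambda>_. True) (Ts ! d ! j)}"
    unfolding Pos_def by simp
  thus ?thesis using card_pairs[of "length Ts" "\<lambda>d. Ts ! d" "\<lambda>_. True"] by simp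
qed

lemma N_card: "total_len Ts = card Pos"
  using card_ch[of "\<lambda>_. True"] unfolding total_len_def by simp

lemma bstart_card: "bstart Ts c = card {x \<in> Pos. ch x < c}"
  unfolding bstart_def using card_ch[of "\<lambda>a. a < c"] by simp

lemma bend_card: "bend Ts c = card {x \<in> Pos. ch x \<le> c}"
  unfolding bend_def using card_ch[of "\<lambda>a. a \<le> c"] by simp

lemma bend_eq: "bend Ts c = bstart Ts c + card {x \<in> Pos. ch x = c}"
proof -
  have "{x \<in> Pos. ch x \<le> c} = {x \<in> Pos. ch x < c} \<union> {x \<in> Pos. ch x = c}" by auto
  moreover have "{x \<in> Pos. ch x < c} \<inter> {x \<in> Pos. ch x = c} = {}" by auto
  ultimately show ?thesis unfolding bend_card bstart_card using finite_Pos
    by (simp add: card_Un_disjoint)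
qed

lemma bucket_order: "c < c' \<Longrightarrow> bend Ts c \<le> bstart Ts c'"
  unfolding bend_card bstart_card using finite_Pos by (intro card_mono) auto

lemma bend_le: "bend Ts c \<le> total_len Ts"
  unfolding bend_card N_card using finite_Pos by (intro card_mono) auto

definition nL :: "'a \<Rightarrow> nat" where "nL c = card {x \<in> Pos. Lp x \<and> ch x = c}"
definition nS :: "'a \<Rightarrow> nat" where "nS c = card {x \<in> Pos. Sp x \<and> ch x = c}"

lemma nLS: "bend Ts c = bstart Ts c + nL c + nS c"
proof -
  have "{x \<in> Pos. ch x = c} = {x \<in> Pos. Lp x \<and> ch x = c} \<union> {x \<in> Pos. Sp x \<and> ch x = c}"
    using LS by auto
  moreover have "{x \<in> Pos. Lp x \<and> ch x = c} \<inter> {x \<in> Pos. Sp x \<and> ch x = c} = {}" using LS by auto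
  ultimately have "card {x \<in> Pos. ch x = c} = nL c + nS c" unfolding nL_def nS_def using finite_Pos
    by (simp add: card_Un_disjoint)
  thus ?thesis using bend_eq by simp
qed

definition idxl :: "(nat \<times> nat) list \<Rightarrow> nat \<times> nat \<Rightarrow> nat" where
  "idxl ys z = bend Ts (ch z) - Suc (card {w \<in> aft ys z. ch w = ch z})"

lemma idx_bounds:
  assumes d: "distinct ys" and s: "set ys \<subseteq> Pos" and z: "z \<in> set ys"
  shows "bend Ts (ch z) - card {w \<in> set ys. ch w = ch z} \<le> idxl ys z"
    and "idxl ys z < bend Ts (ch z)"
    and "card {w \<in> set ys. ch w = ch z} \<le> card {x \<in> Pos. ch x = ch z}"
proof -
  have "{w \<in> aft ys z. ch w = ch z} \<subset> {w \<in> set ys. ch w = ch z}"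
    using aft_sub[of ys z] aft_notin[OF d, of z] z by auto
  hence lt: "card {w \<in> aft ys z. ch w = ch z} < card {w \<in> set ys. ch w = ch z}"
    by (intro psubset_card_mono) auto
  show le: "card {w \<in> set ys. ch w = ch z} \<le> card {x \<in> Pos. ch x = ch z}"
    using s finite_Pos by (intro card_mono) auto
  have "card {x \<in> Pos. ch x = ch z} \<le> bend Ts (ch z)" using bend_eq by simp
  thus "bend Ts (ch z) - card {w \<in> set ys. ch w = ch z} \<le> idxl ys z"
    "idxl ys z < bend Ts (ch z)" unfolding idxl_def using lt le by auto
qed

lemma idx_ge_bstart:
  assumes d: "distinct ys" and s: "set ys \<subseteq> Pos" and z: "z \<in> set ys"
  shows "bstart Ts (ch z) \<le> idxl ys z"
  using idx_bounds[OF assms] bend_eq[of "ch z"] by linarith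

lemma step1_put_eq: "step1_put Ts (A, tp) y = (A[tp (ch y) - 1 := Some y], tp(ch y := tp (ch y) - 1))"
  by (cases y) (simp add: step1_put_def ch_def Let_def)

lemma aft_cons_other: "z \<noteq> y \<Longrightarrow> aft (y # ys) z = aft ys z" by simp

lemma step1_gen:
  "distinct ys \<Longrightarrow> set ys \<subseteq> Pos \<Longrightarrow>
   length (fst (foldl (step1_put Ts) (replicate (total_len Ts) None, bend Ts) (rev ys))) = total_len Ts \<and>
   (\<forall>c. snd (foldl (step1_put Ts) (replicate (total_len Ts) None, bend Ts) (rev ys)) c
        = bend Ts c - card {z \<in> set ys. ch z = c}) \<and>
   (\<forall>k<total_len Ts. \<forall>z. fst (foldl (step1_put Ts) (replicate (total_len Ts) None, bend Ts) (rev ys)) ! k = Some z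
        \<longleftrightarrow> z \<in> set ys \<and> idxl ys z = k)"
proof (induct ys)
  case Nil then show ?case by simp
next
  case (Cons y ys)
  obtain A tp where st: "foldl (step1_put Ts) (replicate (total_len Ts) None, bend Ts) (rev ys) = (A, tp)"
    by fastforce
  have d: "distinct ys" "y \<notin> set ys" and s: "set ys \<subseteq> Pos" "y \<in> Pos" using Cons by auto
  have IH: "length A = total_len Ts" "\<And>c. tp c = bend Ts c - card {z \<in> set ys. ch z = c}"
    "\<And>k z. k < total_len Ts \<Longrightarrow> A ! k = Some z \<longleftrightarrow> z \<in> set ys \<and> idxl ys z = k"
    using Cons(1)[OF d(1) s(1)] st by auto
  define c where "c = ch y"
  have dd: "distinct (y # ys)" "set (y # ys) \<subseteq> Pos" using Cons by auto
  have yi: "idxl (y # ys) y = tp c - 1" unfolding idxl_def IH(2) c_def by simp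
  have yN: "idxl (y # ys) y < total_len Ts" using idx_bounds(2)[OF dd, of y] bend_le[of "ch y"] by simp
  have ide: "idxl (y # ys) z = idxl ys z" if "z \<in> set ys" for z
    using that d unfolding idxl_def by auto
  have cnt: "card {z \<in> set (y # ys). ch z = c'} = (if c' = c then Suc (card {z \<in> set ys. ch z = c'}) else card {z \<in> set ys. ch z = c'})" for c'
  proof -
    have "{z \<in> set (y # ys). ch z = c'} = (if c' = c then insert y {z \<in> set ys. ch z = c'} else {z \<in> set ys. ch z = c'})"
      unfolding c_def by auto
    thus ?thesis using d by simp
  qed
  have distinct_idx: "idxl ys z \<noteq> idxl (y # ys) y" if z: "z \<in> set ys" for z
  proof (cases "ch z = c")
    case True
    have "{w \<in> aft ys z. ch w = ch z} \<subset> {w \<in> set ys. ch w = ch z}"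
      using aft_sub[of ys z] aft_notin[OF d(1), of z] z by auto
    hence lt: "card {w \<in> aft ys z. ch w = ch z} < card {w \<in> set ys. ch w = ch z}"
      by (intro psubset_card_mono) auto
    have "card {w \<in> set (y # ys). ch w = ch z} \<le> bend Ts (ch z)"
      using idx_bounds(3)[OF dd, of y] bend_eq[of "ch y"] True c_def by simp
    hence "Suc (card {w \<in> set ys. ch w = ch z}) \<le> bend Ts (ch z)" using cnt[of "ch z"] True by simp
    thus ?thesis using lt True unfolding yi IH(2) idxl_def by (simp add: c_def[symmetric])
  next
    case False
    have b1: "bstart Ts (ch z) \<le> idxl ys z" "idxl ys z < bend Ts (ch z)"
      using idx_ge_bstart[OF d(1) s(1) z] idx_bounds(2)[OF d(1) s(1) z] by auto
    have b2: "bstart Ts c \<le> idxl (y # ys) y" "idxl (y # ys) y < bend Ts c"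
      using idx_ge_bstart[OF dd, of y] idx_bounds(2)[OF dd, of y] c_def by auto
    show ?thesis
    proof (cases "ch z < c")
      case True
      then show ?thesis using b1 b2 bucket_order[OF True] by linarith
    next
      case f2: False
      hence "c < ch z" using False by simp
      then show ?thesis using b1 b2 bucket_order by fastforce
    qed
  qed
  have res: "foldl (step1_put Ts) (replicate (total_len Ts) None, bend Ts) (rev (y # ys))
      = (A[tp c - 1 := Some y], tp(c := tp c - 1))"
    using st step1_put_eq c_def by simp
  show ?case unfolding res
  proof (intro conjI allI impI)
    show "length (fst (A[tp c - 1 := Some y], tp(c := tp c - 1))) = total_len Ts" using IH(1) by simp
    fix c' show "snd (A[tp c - 1 := Some y], tp(c := tp c - 1)) c' = bend Ts c' - card {z \<in> set (y # ys). ch z = c'}"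
      using cnt[of c'] IH(2) by simp
  next
    fix k z assume k: "k < total_len Ts"
    show "fst (A[tp c - 1 := Some y], tp(c := tp c - 1)) ! k = Some z \<longleftrightarrow> z \<in> set (y # ys) \<and> idxl (y # ys) z = k"
    proof (cases "k = tp c - 1")
      case True
      have l: "fst (A[tp c - 1 := Some y], tp(c := tp c - 1)) ! k = Some y" using True IH(1) yN yi by simp
      have r: "z \<in> set (y # ys) \<and> idxl (y # ys) z = k \<longleftrightarrow> z = y"
      proof
        assume a: "z \<in> set (y # ys) \<and> idxl (y # ys) z = k"
        show "z = y"
        proof (rule ccontr)
          assume "z \<noteq> y"
          hence "z \<in> set ys" using a by simp
          thus False using a ide distinct_idx True yi by metis
        qed
      qed (use True yi in simp)
      show ?thesis unfolding l r by auto
    next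
      case False
      have l: "fst (A[tp c - 1 := Some y], tp(c := tp c - 1)) ! k = A ! k" using False by simp
      have r: "z \<in> set (y # ys) \<and> idxl (y # ys) z = k \<longleftrightarrow> z \<in> set ys \<and> idxl ys z = k"
      proof (cases "z = y")
        case True thus ?thesis using False yi d by simp
      next
        case f: False
        show ?thesis
        proof
          assume "z \<in> set (y # ys) \<and> idxl (y # ys) z = k"
          moreover hence "z \<in> set ys" using f by simp
          ultimately show "z \<in> set ys \<and> idxl ys z = k" using ide by simp
        next
          assume "z \<in> set ys \<and> idxl ys z = k"
          thus "z \<in> set (y # ys) \<and> idxl (y # ys) z = k" using ide by simp
        qed
      qed
      show ?thesis unfolding l r using IH(3)[OF k] .
    qed
  qed
qed

end



lemma lexF [simp]:
  fixes a b :: "'a::linorder"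
  shows "ord_class.lexordp ((False, a, 0::nat) # r) ((False, b, 0::nat) # s) \<longleftrightarrow> a < b \<or> (a = b \<and> ord_class.lexordp r s)"
  by auto

context IS begin

definition idx :: "nat \<times> nat \<Rightarrow> nat" where "idx z = idxl ord z"

lemma ord_Pos: "set ord \<subseteq> Pos" using ord_iff by auto

lemma A1_all: "length (step1 Ts ord) = total_len Ts \<and>
   (\<forall>k<total_len Ts. \<forall>z. step1 Ts ord ! k = Some z \<longleftrightarrow> z \<in> set ord \<and> idxl ord z = k)"
proof -
  note h = step1_gen[OF ord_dist ord_Pos]
  show ?thesis unfolding step1_def
    using conjunct1[OF h] conjunct2[OF conjunct2[OF h]] by (rule conjI)
qed

lemma A1_len: "length (step1 Ts ord) = total_len Ts"
  using A1_all by (rule conjunct1)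

lemma A1_nth: "k < total_len Ts \<Longrightarrow> step1 Ts ord ! k = Some z \<longleftrightarrow> z \<in> set ord \<and> idx z = k"
  unfolding idx_def using conjunct2[OF A1_all] by blast

lemma idx_lt: "z \<in> set ord \<Longrightarrow> idx z < bend Ts (ch z)"
  using idx_bounds(2)[OF ord_dist ord_Pos] unfolding idx_def by simp

lemma idx_N: "z \<in> set ord \<Longrightarrow> idx z < total_len Ts"
  using idx_lt[of z] bend_le[of "ch z"] by linarith

lemma idx_ge: "z \<in> set ord \<Longrightarrow> bstart Ts (ch z) + nL (ch z) \<le> idx z"
proof -
  assume z: "z \<in> set ord"
  define K where "K = card {w \<in> set ord. ch w = ch z}"
  have b: "K \<le> nS (ch z)"
    unfolding nS_def K_def using ord_iff Mp_S finite_Pos by (intro card_mono) auto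
  have a: "bend Ts (ch z) - K \<le> idx z" using idx_bounds(1)[OF ord_dist ord_Pos z] unfolding idx_def K_def .
  have c: "bend Ts (ch z) = bstart Ts (ch z) + nL (ch z) + nS (ch z)" by (rule nLS)
  from a b c show ?thesis by linarith
qed

lemma idx_inj: assumes z1: "z1 \<in> set ord" and z2: "z2 \<in> set ord" and e: "idx z1 = idx z2" shows "z1 = z2"
proof -
  have 1: "step1 Ts ord ! idx z1 = Some z1" by (rule iffD2[OF A1_nth[OF idx_N[OF z1]]]) (simp add: z1)
  have 2: "step1 Ts ord ! idx z2 = Some z2" by (rule iffD2[OF A1_nth[OF idx_N[OF z2]]]) (simp add: z2)
  from 1 2 e show ?thesis by (metis option.inject)
qed

definition key :: "nat \<times> nat \<Rightarrow> (bool \<times> 'a \<times> nat) list" where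
  "key x = map (\<lambda>c. (False, c, 0)) (U x) @ [(True, ch (endp x), idx (endp x))]"

lemma key_rec: "x \<in> Pos \<Longrightarrow> key x = (False, ch x, 0) #
  (if Mp (sc x) then [(False, ch (sc x), 0), (True, ch (sc x), idx (sc x))] else key (sc x))"
proof -
  assume x: "x \<in> Pos"
  show ?thesis
  proof (cases "Mp (sc x)")
    case True
    then show ?thesis unfolding key_def using U_rec[OF x] endp_rec[OF x] by simp
  next
    case False
    then show ?thesis unfolding key_def using U_rec[OF x] endp_rec[OF x] by simp
  qed
qed

lemma key_hd: "x \<in> Pos \<Longrightarrow> \<exists>r. key x = (False, ch x, 0) # r"
  by (rule exI) (rule key_rec)

lemma key_two: "x \<in> Pos \<Longrightarrow> \<exists>a r. key x = (False, ch x, 0) # (False, a, 0) # r"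
proof -
  assume x: "x \<in> Pos"
  show ?thesis
  proof (cases "Mp (sc x)")
    case True
    then show ?thesis using key_rec[OF x] by simp
  next
    case False
    obtain r where "key (sc x) = (False, ch (sc x), 0) # r" using key_hd[OF sc_Pos[OF x]] by blast
    then show ?thesis using key_rec[OF x] False by simp
  qed
qed

definition lt :: "nat \<times> nat \<Rightarrow> nat \<times> nat \<Rightarrow> bool" where
  "lt x y \<longleftrightarrow> ord_class.lexordp (key x) (key y)"

lemma lt_irrefl: "\<not> lt x x" unfolding lt_def by (simp add: lexordp_irreflexive')

lemma lt_trans: "lt x y \<Longrightarrow> lt y z \<Longrightarrow> lt x z" unfolding lt_def using lexordp_trans by blast

lemma lt_asym: "lt x y \<Longrightarrow> lt y x \<Longrightarrow> False" unfolding lt_def using lexordp_antisym by blast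

lemma key_inj:
  assumes x: "x \<in> Pos" and y: "y \<in> Pos" and e: "key x = key y" shows "x = y"
proof -
  have l: "length (map (\<lambda>c. (False, c, 0::nat)) (U x)) = length (map (\<lambda>c. (False, c, 0::nat)) (U y))"
  proof -
    have "length (key x) = length (key y)" using e by simp
    thus ?thesis unfolding key_def by simp
  qed
  have "map (\<lambda>c. (False, c, 0::nat)) (U x) = map (\<lambda>c. (False, c, 0::nat)) (U y) \<and>
        [(True, ch (endp x), idx (endp x))] = [(True, ch (endp y), idx (endp y))]"
  proof -
    have e': "map (\<lambda>c. (False, c, 0::nat)) (U x) @ [(True, ch (endp x), idx (endp x))] =
      map (\<lambda>c. (False, c, 0::nat)) (U y) @ [(True, ch (endp y), idx (endp y))]" using e unfolding key_def .
    show ?thesis using iffD1[OF append_eq_append_conv[OF disjI1[OF l]] e'] .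
  qed
  hence uu: "U x = U y" and ii: "idx (endp x) = idx (endp y)"
    by (auto simp: inj_on_def intro: map_injective)
  have "endp x \<in> set ord" "endp y \<in> set ord" using endp_M endp_Pos ord_iff x y by auto
  hence "endp x = endp y" using idx_inj[OF _ _ ii] by simp
  moreover have "Suc (dst x) = Suc (dst y)" using uu U_len[of x] U_len[of y] by simp
  hence "dst x = dst y" by simp
  ultimately show ?thesis using endp_U_inj[OF x y] by simp
qed

lemma lt_total: "x \<in> Pos \<Longrightarrow> y \<in> Pos \<Longrightarrow> x \<noteq> y \<Longrightarrow> lt x y \<or> lt y x"
  unfolding lt_def using lexordp_linear[of "key x" "key y"] key_inj[of x y] by auto

lemma lt_ch: "x \<in> Pos \<Longrightarrow> y \<in> Pos \<Longrightarrow> lt x y \<Longrightarrow> ch x \<le> ch y"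
proof -
  assume x: "x \<in> Pos" and y: "y \<in> Pos" and l: "lt x y"
  obtain r s where "key x = (False, ch x, 0) # r" "key y = (False, ch y, 0) # s"
    using key_hd[OF x] key_hd[OF y] by metis
  thus ?thesis using l unfolding lt_def by auto
qed

lemma lt_head: "x \<in> Pos \<Longrightarrow> y \<in> Pos \<Longrightarrow> ch x < ch y \<Longrightarrow> lt x y"
proof -
  assume x: "x \<in> Pos" and y: "y \<in> Pos" and l: "ch x < ch y"
  obtain r s where "key x = (False, ch x, 0) # r" "key y = (False, ch y, 0) # s"
    using key_hd[OF x] key_hd[OF y] by metis
  thus ?thesis using l unfolding lt_def by auto
qed

lemma S_ch_sc: "x \<in> Pos \<Longrightarrow> Sp x \<Longrightarrow> ch x \<le> ch (sc x)"
  using F1(2)[of x] LS[of x] by force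

lemma L_ch_sc: "x \<in> Pos \<Longrightarrow> Lp x \<Longrightarrow> ch (sc x) \<le> ch x"
  using F1(1)[of x] LS[of x] by force

lemma L_M_sc: "x \<in> Pos \<Longrightarrow> Lp x \<Longrightarrow> Mp (sc x) \<Longrightarrow> ch (sc x) < ch x"
proof -
  assume x: "x \<in> Pos" and l: "Lp x" and m: "Mp (sc x)"
  have "Sp (sc x)" using Mp_S m .
  hence "ch (sc x) \<noteq> ch x" using F1(3)[OF x] l LS[OF x] by auto
  thus ?thesis using L_ch_sc[OF x l] by simp
qed

lemma O3: "x \<in> Pos \<Longrightarrow> y \<in> Pos \<Longrightarrow> Lp x \<Longrightarrow> Sp y \<Longrightarrow> ch x = ch y \<Longrightarrow> lt x y"
proof (induct "dst x" arbitrary: x y rule: less_induct)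
  case less
  note x = less(2) and y = less(3)
  have sy: "\<not> Mp (sc y)" using S_sc_notM[OF y less(5)] .
  have ky: "key y = (False, ch y, 0) # key (sc y)" using key_rec[OF y] sy by simp
  have cy: "ch y \<le> ch (sc y)" using S_ch_sc[OF y less(5)] .
  obtain s where ks: "key (sc y) = (False, ch (sc y), 0) # s" using key_hd[OF sc_Pos[OF y]] by metis
  show ?case
  proof (cases "Mp (sc x)")
    case True
    have "ch (sc x) < ch x" using L_M_sc[OF x less(4) True] .
    moreover have "key x = (False, ch x, 0) # [(False, ch (sc x), 0), (True, ch (sc x), idx (sc x))]"
      using key_rec[OF x] True by simp
    ultimately show ?thesis unfolding lt_def using ky ks cy less(6) by auto
  next
    case False
    have kx: "key x = (False, ch x, 0) # key (sc x)" using key_rec[OF x] False by simp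
    have cx: "ch (sc x) \<le> ch x" using L_ch_sc[OF x less(4)] .
    have "lt (sc x) (sc y)"
    proof (cases "ch (sc x) < ch (sc y)")
      case True then show ?thesis using lt_head[OF sc_Pos[OF x] sc_Pos[OF y]] by simp
    next
      case f: False
      hence e1: "ch (sc x) = ch x" "ch (sc y) = ch y" using cx cy less(6) by auto
      have "Lp (sc x)" using F1(3)[OF x] e1 less(4) LS x sc_Pos by auto
      moreover have "Sp (sc y)" using F1(3)[OF y] e1 less(5) by auto
      moreover have "dst (sc x) < dst x" using dstx_Suc[OF x False] by simp
      ultimately show ?thesis using less(1) sc_Pos x y e1 less(6) by simp
    qed
    then show ?thesis unfolding lt_def using kx ky less(6) by simp
  qed
qed

lemma O5: "x \<in> Pos \<Longrightarrow> y \<in> Pos \<Longrightarrow> Sp x \<Longrightarrow> Sp y \<Longrightarrow> ch x = ch y \<Longrightarrow> lt x y \<longleftrightarrow> lt (sc x) (sc y)"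
proof -
  assume x: "x \<in> Pos" and y: "y \<in> Pos" and s: "Sp x" "Sp y" and c: "ch x = ch y"
  have "key x = (False, ch x, 0) # key (sc x)" using key_rec[OF x] S_sc_notM[OF x s(1)] by simp
  moreover have "key y = (False, ch y, 0) # key (sc y)" using key_rec[OF y] S_sc_notM[OF y s(2)] by simp
  ultimately show ?thesis unfolding lt_def using c by simp
qed

lemma O5': "x \<in> Pos \<Longrightarrow> Sp x \<Longrightarrow> ch (sc x) = ch x \<Longrightarrow> lt x (sc x)"
proof (induct "dst x" arbitrary: x rule: less_induct)
  case less
  note x = less(2)
  have sx: "sc x \<in> Pos" using sc_Pos x .
  have ssx: "Sp (sc x)" using F1(3)[OF x] less(3,4) by simp
  have n1: "\<not> Mp (sc x)" using S_sc_notM[OF x less(3)] .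
  have n2: "\<not> Mp (sc (sc x))" using S_sc_notM[OF sx ssx] .
  have kx: "key x = (False, ch x, 0) # key (sc x)" using key_rec[OF x] n1 by simp
  have ksx: "key (sc x) = (False, ch (sc x), 0) # key (sc (sc x))" using key_rec[OF sx] n2 by simp
  have "lt (sc x) (sc (sc x))"
  proof (cases "ch (sc x) < ch (sc (sc x))")
    case True then show ?thesis using lt_head[OF sx sc_Pos[OF sx]] by simp
  next
    case False
    hence "ch (sc (sc x)) = ch (sc x)" using S_ch_sc[OF sx ssx] by simp
    moreover have "dst (sc x) < dst x" using dstx_Suc[OF x n1] by simp
    ultimately show ?thesis using less(1)[OF _ sx ssx] by simp
  qed
  thus ?case unfolding lt_def using kx ksx less(4) by simp
qed

lemma O4': "x \<in> Pos \<Longrightarrow> Lp x \<Longrightarrow> ch (sc x) = ch x \<Longrightarrow> lt (sc x) x"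
proof (induct "dst x" arbitrary: x rule: less_induct)
  case less
  note x = less(2)
  have sx: "sc x \<in> Pos" using sc_Pos x .
  have lsx: "Lp (sc x)" using F1(3)[OF x] less(3,4) LS x sx by auto
  have n1: "\<not> Mp (sc x)" using Mp_S[of "sc x"] lsx LS[OF sx] by auto
  have kx: "key x = (False, ch x, 0) # key (sc x)" using key_rec[OF x] n1 by simp
  show ?case
  proof (cases "Mp (sc (sc x))")
    case True
    have "ch (sc (sc x)) < ch (sc x)" using L_M_sc[OF sx lsx True] .
    moreover have "key (sc x) = (False, ch (sc x), 0) # [(False, ch (sc (sc x)), 0), (True, ch (sc (sc x)), idx (sc (sc x)))]"
      using key_rec[OF sx] True by simp
    moreover obtain r where "key (sc x) = (False, ch (sc x), 0) # r" using key_hd[OF sx] by metis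
    ultimately show ?thesis unfolding lt_def using kx less(4) by auto
  next
    case False
    have ksx: "key (sc x) = (False, ch (sc x), 0) # key (sc (sc x))" using key_rec[OF sx] False by simp
    have "lt (sc (sc x)) (sc x)"
    proof (cases "ch (sc (sc x)) < ch (sc x)")
      case True then show ?thesis using lt_head[OF sc_Pos[OF sx] sx] by simp
    next
      case f: False
      hence "ch (sc (sc x)) = ch (sc x)" using L_ch_sc[OF sx lsx] by simp
      moreover have "dst (sc x) < dst x" using dstx_Suc[OF x n1] by simp
      ultimately show ?thesis using less(1)[OF _ sx lsx] by simp
    qed
    thus ?thesis unfolding lt_def using kx ksx less(4) by simp
  qed
qed

end



context IS begin

definition posL :: "nat \<times> nat \<Rightarrow> nat" where
  "posL x = bstart Ts (ch x) + card {y \<in> Pos. Lp y \<and> ch y = ch x \<and> lt y x}"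
definition posS :: "nat \<times> nat \<Rightarrow> nat" where
  "posS x = bend Ts (ch x) - Suc (card {y \<in> Pos. Sp y \<and> ch y = ch x \<and> lt x y})"
definition pos :: "nat \<times> nat \<Rightarrow> nat" where
  "pos x = (if Lp x then posL x else posS x)"

lemma reg_L: assumes x: "x \<in> Pos" and l: "Lp x"
  shows "bstart Ts (ch x) \<le> pos x" "pos x < bstart Ts (ch x) + nL (ch x)"
proof -
  have "{y \<in> Pos. Lp y \<and> ch y = ch x \<and> lt y x} \<subset> {y \<in> Pos. Lp y \<and> ch y = ch x}"
    using x l lt_irrefl[of x] by auto
  hence "card {y \<in> Pos. Lp y \<and> ch y = ch x \<and> lt y x} < nL (ch x)"
    unfolding nL_def using finite_Pos by (intro psubset_card_mono) auto
  thus "bstart Ts (ch x) \<le> pos x" "pos x < bstart Ts (ch x) + nL (ch x)"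
    unfolding pos_def posL_def using l by auto
qed

lemma reg_S: assumes x: "x \<in> Pos" and s: "Sp x"
  shows "bstart Ts (ch x) + nL (ch x) \<le> pos x" "pos x < bend Ts (ch x)"
proof -
  have "{y \<in> Pos. Sp y \<and> ch y = ch x \<and> lt x y} \<subset> {y \<in> Pos. Sp y \<and> ch y = ch x}"
    using x s lt_irrefl[of x] by auto
  hence c: "card {y \<in> Pos. Sp y \<and> ch y = ch x \<and> lt x y} < nS (ch x)"
    unfolding nS_def using finite_Pos by (intro psubset_card_mono) auto
  have nl: "\<not> Lp x" using LS[OF x] s by simp
  have e: "bend Ts (ch x) = bstart Ts (ch x) + nL (ch x) + nS (ch x)" by (rule nLS)
  show "bstart Ts (ch x) + nL (ch x) \<le> pos x" "pos x < bend Ts (ch x)"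
    unfolding pos_def posS_def using nl c e by auto
qed

lemma pos_bucket0: assumes x: "x \<in> Pos" shows "bstart Ts (ch x) \<le> pos x \<and> pos x < bend Ts (ch x)"
proof -
  have e: "bend Ts (ch x) = bstart Ts (ch x) + nL (ch x) + nS (ch x)" by (rule nLS)
  show ?thesis
  proof (cases "Lp x")
    case True
    then show ?thesis using reg_L[OF x True] e by auto
  next
    case False
    hence "Sp x" using LS[OF x] by simp
    then show ?thesis using reg_S[OF x] e by auto
  qed
qed

lemma pos_bucket: assumes x: "x \<in> Pos" shows "bstart Ts (ch x) \<le> pos x" "pos x < bend Ts (ch x)"
  using pos_bucket0[OF x] by auto

lemma pos_N: "x \<in> Pos \<Longrightarrow> pos x < total_len Ts"
  using pos_bucket(2)[of x] bend_le[of "ch x"] by linarith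

lemma bucket_sep: "c1 < c2 \<Longrightarrow> a < bend Ts c1 \<Longrightarrow> bstart Ts c2 \<le> b \<Longrightarrow> a < b"
  using bucket_order[of c1 c2] by linarith

lemma pos_mono: assumes x: "x \<in> Pos" and y: "y \<in> Pos" and l: "lt x y" shows "pos x < pos y"
proof -
  have c: "ch x \<le> ch y" using lt_ch[OF x y l] .
  show ?thesis
  proof (cases "ch x < ch y")
    case True
    show ?thesis using bucket_sep[OF True pos_bucket(2)[OF x] pos_bucket(1)[OF y]] .
  next
    case False
    hence cc: "ch x = ch y" using c by simp
    show ?thesis
    proof (cases "Lp x")
      case lx: True
      show ?thesis
      proof (cases "Lp y")
        case ly: True
        have "{z \<in> Pos. Lp z \<and> ch z = ch x \<and> lt z x} \<subset> {z \<in> Pos. Lp z \<and> ch z = ch y \<and> lt z y}"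
          using lt_trans[of _ x y] l lt_irrefl[of x] x lx cc by auto
        hence "card {z \<in> Pos. Lp z \<and> ch z = ch x \<and> lt z x} < card {z \<in> Pos. Lp z \<and> ch z = ch y \<and> lt z y}"
          using finite_Pos by (intro psubset_card_mono) auto
        then show ?thesis unfolding pos_def posL_def using lx ly cc by simp
      next
        case ly: False
        hence "Sp y" using LS[OF y] by simp
        then have "bstart Ts (ch y) + nL (ch y) \<le> pos y" using reg_S(1)[OF y] by simp
        moreover have "pos x < bstart Ts (ch y) + nL (ch y)" using reg_L(2)[OF x lx] unfolding cc .
        ultimately show ?thesis by linarith
      qed
    next
      case lx: False
      hence sx: "Sp x" using LS[OF x] by simp
      show ?thesis
      proof (cases "Lp y")
        case ly: True
        have "lt y x" using O3[OF y x ly sx] cc by simp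
        then show ?thesis using lt_asym l by blast
      next
        case ly: False
        hence sy: "Sp y" using LS[OF y] by simp
        have "{z \<in> Pos. Sp z \<and> ch z = ch y \<and> lt y z} \<subset> {z \<in> Pos. Sp z \<and> ch z = ch x \<and> lt x z}"
          using lt_trans[of x y] l lt_irrefl[of y] y sy cc by auto
        hence lt1: "card {z \<in> Pos. Sp z \<and> ch z = ch y \<and> lt y z} < card {z \<in> Pos. Sp z \<and> ch z = ch x \<and> lt x z}"
          using finite_Pos by (intro psubset_card_mono) auto
        have "{z \<in> Pos. Sp z \<and> ch z = ch x \<and> lt x z} \<subset> {z \<in> Pos. Sp z \<and> ch z = ch x}"
          using x sx lt_irrefl[of x] by auto
        hence "card {z \<in> Pos. Sp z \<and> ch z = ch x \<and> lt x z} < nS (ch x)"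
          unfolding nS_def using finite_Pos by (intro psubset_card_mono) auto
        moreover have "bend Ts (ch x) = bstart Ts (ch x) + nL (ch x) + nS (ch x)" by (rule nLS)
        ultimately have "Suc (card {z \<in> Pos. Sp z \<and> ch z = ch x \<and> lt x z}) \<le> bend Ts (ch x)"
          by linarith
        then show ?thesis unfolding pos_def posS_def using lx ly cc lt1 by simp
      qed
    qed
  qed
qed

lemma pos_inj: "x \<in> Pos \<Longrightarrow> y \<in> Pos \<Longrightarrow> pos x = pos y \<Longrightarrow> x = y"
  using lt_total pos_mono by (metis less_irrefl)

lemma pos_iff: "x \<in> Pos \<Longrightarrow> y \<in> Pos \<Longrightarrow> pos x < pos y \<longleftrightarrow> lt x y"
  using lt_total pos_mono by (metis less_irrefl less_asym)

lemma pos_surj: assumes k: "k < total_len Ts" shows "\<exists>x \<in> Pos. pos x = k"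
proof -
  have inj: "inj_on pos Pos" using pos_inj by (auto simp: inj_on_def)
  have sub: "pos ` Pos \<subseteq> {..<total_len Ts}" using pos_N by auto
  have "card (pos ` Pos) = card {..<total_len Ts}" using card_image[OF inj] N_card by simp
  hence "pos ` Pos = {..<total_len Ts}" using card_subset_eq[OF _ sub] by simp
  hence "k \<in> pos ` Pos" using k by simp
  thus ?thesis by (auto simp: image_iff)
qed

definition pos2 :: "nat \<times> nat \<Rightarrow> nat" where "pos2 z = (if Lp z then pos z else idx z)"

lemma M_notL: "x \<in> Pos \<Longrightarrow> Mp x \<Longrightarrow> \<not> Lp x"
  using Mp_S LS by blast

lemma L_sc_pos2: assumes x: "x \<in> Pos" and l: "Lp x" shows "pos2 (sc x) < pos x"
proof -
  have sx: "sc x \<in> Pos" using sc_Pos[OF x] .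
  show ?thesis
  proof (cases "Mp (sc x)")
    case True
    have c: "ch (sc x) < ch x" using L_M_sc[OF x l True] .
    have "pos2 (sc x) = idx (sc x)" unfolding pos2_def using M_notL[OF sx True] by simp
    moreover have "idx (sc x) < bend Ts (ch (sc x))" using idx_lt ord_iff sx True by simp
    ultimately show ?thesis using bucket_sep[OF c _ pos_bucket(1)[OF x]] by simp
  next
    case False
    hence ls: "Lp (sc x)" using L_sc[OF x l] by simp
    have p2: "pos2 (sc x) = pos (sc x)" unfolding pos2_def using ls by simp
    show ?thesis
    proof (cases "ch (sc x) < ch x")
      case True
      then show ?thesis using p2 bucket_sep[OF True pos_bucket(2)[OF sx] pos_bucket(1)[OF x]] by simp
    next
      case f: False
      hence "ch (sc x) = ch x" using L_ch_sc[OF x l] by simp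
      hence "lt (sc x) x" using O4'[OF x l] by simp
      then show ?thesis using p2 pos_mono[OF sx x] by simp
    qed
  qed
qed

lemma pos2_N: assumes z: "z \<in> Pos" and lm: "Lp z \<or> Mp z" shows "pos2 z < total_len Ts"
proof (cases "Lp z")
  case True then show ?thesis unfolding pos2_def using pos_N[OF z] by simp
next
  case False
  hence "z \<in> set ord" using ord_iff[of z] z lm by simp
  then show ?thesis unfolding pos2_def using idx_N False by simp
qed

lemma pos2_inj: assumes z1: "z1 \<in> Pos" "Lp z1 \<or> Mp z1" and z2: "z2 \<in> Pos" "Lp z2 \<or> Mp z2"
  and e: "pos2 z1 = pos2 z2" shows "z1 = z2"
proof -
  have sep: "pos z \<noteq> idx w" if z: "z \<in> Pos" "Lp z" and w: "w \<in> Pos" "Mp w" for z w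
  proof -
    have w': "w \<in> set ord" using ord_iff w by simp
    have r1: "bstart Ts (ch z) \<le> pos z" "pos z < bstart Ts (ch z) + nL (ch z)" using reg_L[OF z] by auto
    have r2: "bstart Ts (ch w) + nL (ch w) \<le> idx w" "idx w < bend Ts (ch w)" using idx_ge[OF w'] idx_lt[OF w'] by auto
    have e2: "bend Ts (ch z) = bstart Ts (ch z) + nL (ch z) + nS (ch z)" by (rule nLS)
    consider "ch z < ch w" | "ch z = ch w" | "ch w < ch z" by fastforce
    thus ?thesis
    proof cases
      case 1 then show ?thesis using bucket_sep[OF 1, of "pos z" "idx w"] r1 r2 e2 by linarith
    next
      case 2 then show ?thesis using r1 r2 by simp
    next
      case 3 then show ?thesis using bucket_sep[OF 3, of "idx w" "pos z"] r1 r2 by linarith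
    qed
  qed
  show ?thesis
  proof (cases "Lp z1")
    case l1: True
    show ?thesis
    proof (cases "Lp z2")
      case True then show ?thesis using e l1 pos_inj[OF z1(1) z2(1)] unfolding pos2_def by simp
    next
      case False
      hence "Mp z2" using z2 by simp
      then show ?thesis using sep[OF z1(1) l1 z2(1)] e l1 False unfolding pos2_def by simp
    qed
  next
    case l1: False
    hence m1: "Mp z1" using z1 by simp
    show ?thesis
    proof (cases "Lp z2")
      case True then show ?thesis using sep[OF z2(1) True z1(1) m1] e l1 unfolding pos2_def by simp
    next
      case False
      hence "Mp z2" using z2 by simp
      then show ?thesis using idx_inj ord_iff z1 z2 m1 e l1 False unfolding pos2_def by simp
    qed
  qed
qed

lemma O4: assumes w: "w \<in> Pos" and y: "y \<in> Pos" and lw: "Lp w" and ly: "Lp y"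
  and c: "ch w = ch y" and l: "lt w y" shows "pos2 (sc w) < pos2 (sc y)"
proof -
  have sw: "sc w \<in> Pos" and sy: "sc y \<in> Pos" using sc_Pos w y by auto
  have idx_r: "bstart Ts (ch z) + nL (ch z) \<le> idx z \<and> idx z < bend Ts (ch z)" if "z \<in> Pos" "Mp z" for z
    using idx_ge idx_lt ord_iff that by simp
  show ?thesis
  proof (cases "Mp (sc w)")
    case mw: True
    have kw: "key w = (False, ch w, 0) # [(False, ch (sc w), 0), (True, ch (sc w), idx (sc w))]"
      using key_rec[OF w] mw by simp
    have p2w: "pos2 (sc w) = idx (sc w)" unfolding pos2_def using M_notL[OF sw mw] by simp
    show ?thesis
    proof (cases "Mp (sc y)")
      case my: True
      have ky: "key y = (False, ch y, 0) # [(False, ch (sc y), 0), (True, ch (sc y), idx (sc y))]"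
        using key_rec[OF y] my by simp
      have p2y: "pos2 (sc y) = idx (sc y)" unfolding pos2_def using M_notL[OF sy my] by simp
      have "ch (sc w) < ch (sc y) \<or> (ch (sc w) = ch (sc y) \<and> idx (sc w) < idx (sc y))"
        using l c unfolding lt_def kw ky by auto
      thus ?thesis
      proof
        assume a: "ch (sc w) < ch (sc y)"
        show ?thesis using bucket_sep[OF a, of "idx (sc w)" "idx (sc y)"] idx_r[OF sw mw] idx_r[OF sy my] p2w p2y
          by linarith
      qed (simp add: p2w p2y)
    next
      case my: False
      have lsy: "Lp (sc y)" using L_sc[OF y ly] my by simp
      obtain e r where ksy: "key (sc y) = (False, ch (sc y), 0) # (False, e, 0) # r" using key_two[OF sy] by blast
      have ky: "key y = (False, ch y, 0) # key (sc y)" using key_rec[OF y] my by simp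
      have p2y: "pos2 (sc y) = pos (sc y)" unfolding pos2_def using lsy by simp
      have a: "ch (sc w) < ch (sc y)" using l c unfolding lt_def kw ky ksy by auto
      show ?thesis using bucket_sep[OF a, of "idx (sc w)" "pos (sc y)"] idx_r[OF sw mw] pos_bucket(1)[OF sy] p2w p2y
        by linarith
    qed
  next
    case mw: False
    have lsw: "Lp (sc w)" using L_sc[OF w lw] mw by simp
    have kw: "key w = (False, ch w, 0) # key (sc w)" using key_rec[OF w] mw by simp
    obtain e r where ksw: "key (sc w) = (False, ch (sc w), 0) # (False, e, 0) # r" using key_two[OF sw] by blast
    have p2w: "pos2 (sc w) = pos (sc w)" unfolding pos2_def using lsw by simp
    show ?thesis
    proof (cases "Mp (sc y)")
      case my: True
      have ky: "key y = (False, ch y, 0) # [(False, ch (sc y), 0), (True, ch (sc y), idx (sc y))]"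
        using key_rec[OF y] my by simp
      have p2y: "pos2 (sc y) = idx (sc y)" unfolding pos2_def using M_notL[OF sy my] by simp
      have a: "ch (sc w) \<le> ch (sc y)" using l c unfolding lt_def kw ky ksw by auto
      show ?thesis
      proof (cases "ch (sc w) < ch (sc y)")
        case True
        show ?thesis using bucket_sep[OF True, of "pos (sc w)" "idx (sc y)"] idx_r[OF sy my] pos_bucket(2)[OF sw] p2w p2y
          by linarith
      next
        case False
        hence "ch (sc w) = ch (sc y)" using a by simp
        then show ?thesis using reg_L(2)[OF sw lsw] idx_r[OF sy my] p2w p2y by simp
      qed
    next
      case my: False
      have ky: "key y = (False, ch y, 0) # key (sc y)" using key_rec[OF y] my by simp
      have lsy: "Lp (sc y)" using L_sc[OF y ly] my by simp
      have p2y: "pos2 (sc y) = pos (sc y)" unfolding pos2_def using lsy by simp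
      have "lt (sc w) (sc y)" using l c unfolding lt_def kw ky by simp
      then show ?thesis using pos_mono[OF sw sy] p2w p2y by simp
    qed
  qed
qed

end



context IS begin

abbreviation NN where "NN \<equiv> total_len Ts"
abbreviation A1 where "A1 \<equiv> step1 Ts ord"

definition W2 :: "nat \<Rightarrow> (nat \<times> nat) set" where "W2 p = {x \<in> Pos. Lp x \<and> pos2 (sc x) < p}"

definition Inv2 :: "nat \<Rightarrow> arr \<Rightarrow> ('a \<Rightarrow> nat) \<Rightarrow> bool" where
  "Inv2 p A hp \<longleftrightarrow> length A = NN \<and> (\<forall>c. hp c = bstart Ts c + card {x \<in> W2 p. ch x = c}) \<and>
     (\<forall>k<NN. (\<forall>x\<in>W2 p. pos x = k \<longrightarrow> A ! k = Some x) \<and> ((\<forall>x\<in>W2 p. pos x \<noteq> k) \<longrightarrow> A ! k = A1 ! k))"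

lemma step2_at_eq: "step2_at Ts (A, hp) p = (case A ! p of None \<Rightarrow> (A, hp)
   | Some z \<Rightarrow> if Lp (pr z) then (A[hp (ch (pr z)) := Some (pr z)], hp(ch (pr z) := hp (ch (pr z)) + 1)) else (A, hp))"
  by (cases "A ! p") (auto simp: step2_at_def pr_def Lp_def ch_def Let_def split: prod.split)

lemma W2_fin: "finite (W2 p)" unfolding W2_def using finite_Pos by simp

lemma Inv2_0: "Inv2 0 A1 (bstart Ts)"
  unfolding Inv2_def W2_def using A1_len by simp

lemma L_or_M_sc: "x \<in> Pos \<Longrightarrow> Lp x \<Longrightarrow> sc x \<in> Pos \<and> (Lp (sc x) \<or> Mp (sc x))"
  using sc_Pos L_sc by blast

lemma Inv2_step:
  assumes p: "p < NN" and inv: "Inv2 p A hp"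
  shows "Inv2 (Suc p) (fst (step2_at Ts (A, hp) p)) (snd (step2_at Ts (A, hp) p))"
proof -
  define W where "W = W2 p"
  have len: "length A = NN" and hpv: "\<And>c. hp c = bstart Ts c + card {x \<in> W. ch x = c}"
    and fill: "\<And>k x. k < NN \<Longrightarrow> x \<in> W \<Longrightarrow> pos x = k \<Longrightarrow> A ! k = Some x"
    and rest: "\<And>k. k < NN \<Longrightarrow> (\<forall>x\<in>W. pos x \<noteq> k) \<Longrightarrow> A ! k = A1 ! k"
    using inv unfolding Inv2_def W_def by auto
  have Wsub: "\<And>x. x \<in> W \<Longrightarrow> x \<in> Pos \<and> Lp x \<and> pos2 (sc x) < p" unfolding W_def W2_def by auto
  have W': "W2 (Suc p) = W \<union> {x \<in> Pos. Lp x \<and> pos2 (sc x) = p}" unfolding W_def W2_def by auto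
  have p2L: "pos2 x = pos x" if "Lp x" for x unfolding pos2_def using that by simp
  show ?thesis
  proof (cases "\<exists>z \<in> Pos. (Lp z \<or> Mp z) \<and> pos2 z = p")
    case False
    have none: "A ! p = None"
    proof -
      have "\<forall>x\<in>W. pos x \<noteq> p" using False Wsub p2L by fastforce
      hence "A ! p = A1 ! p" using rest p by simp
      moreover have "A1 ! p = None"
      proof (rule ccontr)
        assume "A1 ! p \<noteq> None"
        then obtain z where "A1 ! p = Some z" by auto
        hence zz: "z \<in> set ord \<and> idx z = p" using iffD1[OF A1_nth[OF p]] by blast
        hence "z \<in> set ord" "idx z = p" by auto
        hence "z \<in> Pos" "Mp z" "pos2 z = p" using ord_iff M_notL unfolding pos2_def by auto
        thus False using False by auto
      qed
      ultimately show ?thesis by simp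
    qed
    have e: "{x \<in> Pos. Lp x \<and> pos2 (sc x) = p} = {}" using False L_or_M_sc by blast
    have "W2 (Suc p) = W" unfolding W' e by simp
    moreover have "step2_at Ts (A, hp) p = (A, hp)" using none step2_at_eq by simp
    ultimately show ?thesis using inv unfolding W_def Inv2_def by simp
  next
    case True
    then obtain z where z: "z \<in> Pos" "Lp z \<or> Mp z" "pos2 z = p" by blast
    have Ap: "A ! p = Some z"
    proof (cases "Lp z")
      case True
      have "pos2 (sc z) < pos z" using L_sc_pos2[OF z(1) True] .
      moreover have pz: "pos z = p" using z(3) p2L[OF True] by simp
      ultimately have zW: "z \<in> W" unfolding W_def W2_def using z True by simp
      show ?thesis using fill[OF p zW pz] .
    next
      case False
      hence m: "Mp z" and pi: "pos2 z = idx z" using z unfolding pos2_def by auto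
      have "\<forall>x\<in>W. pos x \<noteq> p"
      proof (intro ballI notI)
        fix x assume x: "x \<in> W" "pos x = p"
        have xx: "x \<in> Pos" "Lp x" using Wsub[OF x(1)] by auto
        have "pos2 x = pos2 z" using p2L[OF xx(2)] x(2) z(3) by simp
        hence "x = z" using pos2_inj[OF xx(1) disjI1[OF xx(2)] z(1,2)] by simp
        thus False using Wsub[OF x(1)] False by simp
      qed
      hence "A ! p = A1 ! p" using rest p by simp
      moreover have "A1 ! p = Some z"
      proof (rule iffD2[OF A1_nth[OF p]])
        show "z \<in> set ord \<and> idx z = p" using ord_iff[of z] z(1) m pi z(3) by simp
      qed
      ultimately show ?thesis by simp
    qed
    define y where "y = pr z"
    have y: "y \<in> Pos" "sc y = z" unfolding y_def using pr_Pos[OF z(1)] sc_pr[OF z(1)] by auto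
    have newset: "{x \<in> Pos. Lp x \<and> pos2 (sc x) = p} = (if Lp y then {y} else {})"
    proof -
      have "x = y" if x: "x \<in> Pos" "Lp x" "pos2 (sc x) = p" for x
      proof -
        have "pos2 (sc x) = pos2 z" using x(3) z(3) by simp
        hence "sc x = z" using pos2_inj[OF conjunct1[OF L_or_M_sc[OF x(1,2)]] conjunct2[OF L_or_M_sc[OF x(1,2)]] z(1,2)] by simp
        thus ?thesis unfolding y_def using pr_sc[OF x(1)] by (simp only:)
      qed
      hence sub: "{x \<in> Pos. Lp x \<and> pos2 (sc x) = p} \<subseteq> {y}" by auto
      show ?thesis
      proof (cases "Lp y")
        case True
        have "y \<in> {x \<in> Pos. Lp x \<and> pos2 (sc x) = p}" using y z(3) True by simp
        thus ?thesis using sub True by auto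
      next
        case False
        thus ?thesis using sub by auto
      qed
    qed
    show ?thesis
    proof (cases "Lp y")
      case False
      hence "W2 (Suc p) = W" using W' newset by simp
      moreover have "step2_at Ts (A, hp) p = (A, hp)" using Ap step2_at_eq False y_def by simp
      ultimately show ?thesis using inv unfolding W_def Inv2_def by simp
    next
      case ly: True
      define c where "c = ch y"
      have W'': "W2 (Suc p) = insert y W" using W' newset ly by simp
      have yW: "y \<notin> W"
      proof
        assume "y \<in> W"
        hence "pos2 (sc y) < p" using Wsub by blast
        thus False using y(2) z(3) by simp
      qed
      have set_eq: "{w \<in> Pos. Lp w \<and> ch w = c \<and> lt w y} = {x \<in> W. ch x = c}"
      proof
        show "{w \<in> Pos. Lp w \<and> ch w = c \<and> lt w y} \<subseteq> {x \<in> W. ch x = c}"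
        proof
          fix w assume w: "w \<in> {w \<in> Pos. Lp w \<and> ch w = c \<and> lt w y}"
          hence "pos2 (sc w) < pos2 (sc y)" using O4[OF _ y(1) _ ly] c_def by auto
          thus "w \<in> {x \<in> W. ch x = c}" using w y z(3) unfolding W_def W2_def by auto
        qed
        show "{x \<in> W. ch x = c} \<subseteq> {w \<in> Pos. Lp w \<and> ch w = c \<and> lt w y}"
        proof
          fix x assume x: "x \<in> {x \<in> W. ch x = c}"
          have xp: "x \<in> Pos" "Lp x" "pos2 (sc x) < p" "ch x = c" using x Wsub by auto
          have "x \<noteq> y" using xp y z(3) by auto
          hence "lt x y \<or> lt y x" using lt_total xp(1) y(1) by blast
          moreover have "\<not> lt y x"
          proof
            assume "lt y x"
            hence "pos2 (sc y) < pos2 (sc x)" using O4[OF y(1) xp(1) ly xp(2)] xp(4) c_def by simp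
            thus False using xp(3) y z(3) by simp
          qed
          ultimately show "x \<in> {w \<in> Pos. Lp w \<and> ch w = c \<and> lt w y}" using xp by simp
        qed
      qed
      have posy: "pos y = hp c" unfolding hpv pos_def posL_def using ly set_eq c_def by simp
      have posyN: "pos y < NN" using pos_N[OF y(1)] .
      have st: "step2_at Ts (A, hp) p = (A[pos y := Some y], hp(c := hp c + 1))"
        using Ap step2_at_eq ly y_def c_def posy by simp
      have finW: "finite W" unfolding W_def by (rule W2_fin)
      show ?thesis unfolding st Inv2_def W''
      proof (intro conjI allI impI ballI)
        show "length (fst (A[pos y := Some y], hp(c := hp c + 1))) = NN" using len by simp
      next
        fix c'
        have "{x \<in> insert y W. ch x = c'} = (if c' = c then insert y {x \<in> W. ch x = c'} else {x \<in> W. ch x = c'})"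
          using c_def by auto
        thus "snd (A[pos y := Some y], hp(c := hp c + 1)) c' = bstart Ts c' + card {x \<in> insert y W. ch x = c'}"
          using hpv[of c'] yW finW by auto
      next
        fix k x assume k: "k < NN" and x: "x \<in> insert y W" and px: "pos x = k"
        show "fst (A[pos y := Some y], hp(c := hp c + 1)) ! k = Some x"
        proof (cases "x = y")
          case True then show ?thesis using px len posyN by simp
        next
          case False
          hence "x \<in> W" using x by simp
          moreover have "pos x \<noteq> pos y" using pos_inj Wsub[OF \<open>x \<in> W\<close>] y(1) False by blast
          ultimately show ?thesis using fill[OF k] px by simp
        qed
      next
        fix k assume k: "k < NN" and nx: "\<forall>x\<in>insert y W. pos x \<noteq> k"
        hence "k \<noteq> pos y" by auto
        thus "fst (A[pos y := Some y], hp(c := hp c + 1)) ! k = A1 ! k" using rest[OF k] nx by simp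
      qed
    qed
  qed
qed

lemma Inv2_iter: "p \<le> NN \<Longrightarrow> Inv2 p (fst (foldl (step2_at Ts) (A1, bstart Ts) [0..<p])) (snd (foldl (step2_at Ts) (A1, bstart Ts) [0..<p]))"
proof (induct p)
  case 0 then show ?case using Inv2_0 by simp
next
  case (Suc p)
  then have "Inv2 p (fst (foldl (step2_at Ts) (A1, bstart Ts) [0..<p])) (snd (foldl (step2_at Ts) (A1, bstart Ts) [0..<p]))" by simp
  from Inv2_step[OF _ this] Suc(2) show ?case by simp
qed

abbreviation A2 where "A2 \<equiv> step2 Ts A1"

lemma A2_props: "length A2 = NN" "\<And>x. x \<in> Pos \<Longrightarrow> Lp x \<Longrightarrow> A2 ! pos x = Some x"
  "\<And>k. k < NN \<Longrightarrow> (\<forall>x\<in>Pos. Lp x \<longrightarrow> pos x \<noteq> k) \<Longrightarrow> A2 ! k = A1 ! k"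
proof -
  have inv: "Inv2 NN A2 (snd (foldl (step2_at Ts) (A1, bstart Ts) [0..<NN]))"
    using Inv2_iter[of NN] unfolding step2_def by simp
  have "pos2 (sc x) < NN" if "x \<in> Pos" "Lp x" for x using pos2_N[of "sc x"] L_or_M_sc[OF that] by simp
  hence W: "W2 NN = {x \<in> Pos. Lp x}" unfolding W2_def by auto
  show "length A2 = NN" using inv unfolding Inv2_def by simp
  show "\<And>x. x \<in> Pos \<Longrightarrow> Lp x \<Longrightarrow> A2 ! pos x = Some x" using inv pos_N unfolding Inv2_def W by auto
  show "\<And>k. k < NN \<Longrightarrow> (\<forall>x\<in>Pos. Lp x \<longrightarrow> pos x \<noteq> k) \<Longrightarrow> A2 ! k = A1 ! k" using inv unfolding Inv2_def W by auto
qed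

end



context IS begin

definition W3 :: "nat \<Rightarrow> (nat \<times> nat) set" where "W3 p = {x \<in> Pos. Sp x \<and> p \<le> pos (sc x)}"

definition Inv3 :: "nat \<Rightarrow> arr \<Rightarrow> ('a \<Rightarrow> nat) \<Rightarrow> bool" where
  "Inv3 p A tp \<longleftrightarrow> length A = NN \<and> (\<forall>c. tp c = bend Ts c - card {x \<in> W3 p. ch x = c}) \<and>
     (\<forall>k<NN. (\<forall>x\<in>W3 p. pos x = k \<longrightarrow> A ! k = Some x) \<and> ((\<forall>x\<in>W3 p. pos x \<noteq> k) \<longrightarrow> A ! k = A2 ! k))"

lemma step3_at_eq: "step3_at Ts (A, tp) p = (case A ! p of None \<Rightarrow> (A, tp)
   | Some z \<Rightarrow> if Sp (pr z) then (A[tp (ch (pr z)) - 1 := Some (pr z)], tp(ch (pr z) := tp (ch (pr z)) - 1)) else (A, tp))"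
  by (cases "A ! p") (auto simp: step3_at_def pr_def Sp_def ch_def Let_def split: prod.split)

lemma W3_fin: "finite (W3 p)" unfolding W3_def using finite_Pos by simp

lemma Inv3_init: "Inv3 NN A2 (bend Ts)"
proof -
  have "W3 NN = {}" unfolding W3_def using pos_N sc_Pos by (auto simp: not_le)
  thus ?thesis unfolding Inv3_def using A2_props(1) by simp
qed

lemma S_pos_sc: assumes x: "x \<in> Pos" and s: "Sp x" shows "pos x < pos (sc x)"
proof -
  have sx: "sc x \<in> Pos" using sc_Pos[OF x] .
  show ?thesis
  proof (cases "ch x < ch (sc x)")
    case True
    show ?thesis using bucket_sep[OF True pos_bucket(2)[OF x] pos_bucket(1)[OF sx]] .
  next
    case False
    hence "ch (sc x) = ch x" using S_ch_sc[OF x s] by simp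
    hence "lt x (sc x)" using O5'[OF x s] by simp
    thus ?thesis using pos_mono[OF x sx] by simp
  qed
qed

lemma Inv3_step:
  assumes p: "p < NN" and inv: "Inv3 (Suc p) A tp"
  shows "Inv3 p (fst (step3_at Ts (A, tp) p)) (snd (step3_at Ts (A, tp) p))"
proof -
  define W where "W = W3 (Suc p)"
  have len: "length A = NN" and tpv: "\<And>c. tp c = bend Ts c - card {x \<in> W. ch x = c}"
    and fill: "\<And>k x. k < NN \<Longrightarrow> x \<in> W \<Longrightarrow> pos x = k \<Longrightarrow> A ! k = Some x"
    and rest: "\<And>k. k < NN \<Longrightarrow> (\<forall>x\<in>W. pos x \<noteq> k) \<Longrightarrow> A ! k = A2 ! k"
    using inv unfolding Inv3_def W_def by auto
  have Wsub: "\<And>x. x \<in> W \<Longrightarrow> x \<in> Pos \<and> Sp x \<and> Suc p \<le> pos (sc x)" unfolding W_def W3_def by auto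
  have W': "W3 p = W \<union> {x \<in> Pos. Sp x \<and> pos (sc x) = p}" unfolding W_def W3_def by auto
  obtain z where z: "z \<in> Pos" "pos z = p" using pos_surj[OF p] by blast
  have Ap: "A ! p = Some z"
  proof (cases "Lp z")
    case True
    have "\<forall>x\<in>W. pos x \<noteq> p"
    proof (intro ballI notI)
      fix x assume x: "x \<in> W" "pos x = p"
      have xx: "x \<in> Pos" "Sp x" using Wsub[OF x(1)] by auto
      have "x = z" using pos_inj[OF xx(1) z(1)] x(2) z(2) by simp
      thus False using xx(2) True LS[OF z(1)] by simp
    qed
    hence "A ! p = A2 ! p" using rest[OF p] by simp
    also have "A2 ! p = Some z" using A2_props(2)[OF z(1) True] z(2) by simp
    finally show ?thesis .
  next
    case False
    hence sz: "Sp z" using LS[OF z(1)] by simp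
    have "p < pos (sc z)" using S_pos_sc[OF z(1) sz] z(2) by simp
    hence "z \<in> W" unfolding W_def W3_def using z(1) sz by simp
    thus ?thesis using fill[OF p _ z(2)] by simp
  qed
  define y where "y = pr z"
  have y: "y \<in> Pos" "sc y = z" unfolding y_def using pr_Pos[OF z(1)] sc_pr[OF z(1)] by auto
  have newset: "{x \<in> Pos. Sp x \<and> pos (sc x) = p} = (if Sp y then {y} else {})"
  proof -
    have "x = y" if x: "x \<in> Pos" "Sp x" "pos (sc x) = p" for x
    proof -
      have "pos (sc x) = pos z" using x(3) z(2) by simp
      hence "sc x = z" using pos_inj[OF sc_Pos[OF x(1)] z(1)] by simp
      thus ?thesis unfolding y_def using pr_sc[OF x(1)] by (simp only:)
    qed
    hence sub: "{x \<in> Pos. Sp x \<and> pos (sc x) = p} \<subseteq> {y}" by auto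
    show ?thesis
    proof (cases "Sp y")
      case True
      have "y \<in> {x \<in> Pos. Sp x \<and> pos (sc x) = p}" using y z(2) True by simp
      thus ?thesis using sub True by auto
    next
      case False
      thus ?thesis using sub by auto
    qed
  qed
  show ?thesis
  proof (cases "Sp y")
    case False
    hence "W3 p = W" using W' newset by simp
    moreover have "step3_at Ts (A, tp) p = (A, tp)" using Ap step3_at_eq False y_def by simp
    ultimately show ?thesis using inv unfolding W_def Inv3_def by simp
  next
    case sy: True
    define c where "c = ch y"
    have W'': "W3 p = insert y W" using W' newset sy by simp
    have yW: "y \<notin> W"
    proof
      assume "y \<in> W"
      hence "Suc p \<le> pos (sc y)" using Wsub by blast
      thus False using y(2) z(2) by simp
    qed
    have set_eq: "{w \<in> Pos. Sp w \<and> ch w = c \<and> lt y w} = {x \<in> W. ch x = c}"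
    proof
      show "{w \<in> Pos. Sp w \<and> ch w = c \<and> lt y w} \<subseteq> {x \<in> W. ch x = c}"
      proof
        fix w assume w: "w \<in> {w \<in> Pos. Sp w \<and> ch w = c \<and> lt y w}"
        hence ww: "w \<in> Pos" "Sp w" "ch w = c" "lt y w" by auto
        have "lt (sc y) (sc w)" using O5[OF y(1) ww(1) sy ww(2)] ww(3,4) c_def by simp
        hence "pos (sc y) < pos (sc w)" using pos_mono[OF sc_Pos[OF y(1)] sc_Pos[OF ww(1)]] by simp
        hence "Suc p \<le> pos (sc w)" using y(2) z(2) by simp
        thus "w \<in> {x \<in> W. ch x = c}" using ww unfolding W_def W3_def by simp
      qed
      show "{x \<in> W. ch x = c} \<subseteq> {w \<in> Pos. Sp w \<and> ch w = c \<and> lt y w}"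
      proof
        fix x assume x: "x \<in> {x \<in> W. ch x = c}"
        have xp: "x \<in> Pos" "Sp x" "Suc p \<le> pos (sc x)" "ch x = c" using x Wsub by auto
        have "x \<noteq> y" using xp(3) y(2) z(2) by auto
        hence tot: "lt x y \<or> lt y x" using lt_total[OF xp(1) y(1)] by simp
        moreover have "\<not> lt x y"
        proof
          assume "lt x y"
          hence "lt (sc x) (sc y)" using O5[OF xp(1) y(1) xp(2) sy] xp(4) c_def by simp
          hence "pos (sc x) < pos (sc y)" using pos_mono[OF sc_Pos[OF xp(1)] sc_Pos[OF y(1)]] by simp
          thus False using xp(3) y(2) z(2) by simp
        qed
        ultimately show "x \<in> {w \<in> Pos. Sp w \<and> ch w = c \<and> lt y w}" using xp by simp
      qed
    qed
    have nly: "\<not> Lp y" using LS[OF y(1)] sy by simp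
    have posy: "pos y = tp c - 1" unfolding tpv pos_def posS_def using nly set_eq c_def by simp
    have posyN: "pos y < NN" using pos_N[OF y(1)] .
    have st: "step3_at Ts (A, tp) p = (A[pos y := Some y], tp(c := tp c - 1))"
      using Ap step3_at_eq sy y_def c_def posy by simp
    have finW: "finite W" unfolding W_def by (rule W3_fin)
    show ?thesis unfolding st Inv3_def W''
    proof (intro conjI allI impI ballI)
      show "length (fst (A[pos y := Some y], tp(c := tp c - 1))) = NN" using len by simp
    next
      fix c'
      have "{x \<in> insert y W. ch x = c'} = (if c' = c then insert y {x \<in> W. ch x = c'} else {x \<in> W. ch x = c'})"
        using c_def by auto
      thus "snd (A[pos y := Some y], tp(c := tp c - 1)) c' = bend Ts c' - card {x \<in> insert y W. ch x = c'}"
        using tpv[of c'] yW finW by auto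
    next
      fix k x assume k: "k < NN" and x: "x \<in> insert y W" and px: "pos x = k"
      show "fst (A[pos y := Some y], tp(c := tp c - 1)) ! k = Some x"
      proof (cases "x = y")
        case True then show ?thesis using px len posyN by simp
      next
        case False
        hence xW: "x \<in> W" using x by simp
        have "pos x \<noteq> pos y"
        proof
          assume "pos x = pos y"
          hence "x = y" using pos_inj[OF conjunct1[OF Wsub[OF xW]] y(1)] by simp
          thus False using False by simp
        qed
        thus ?thesis using fill[OF k xW px] px by simp
      qed
    next
      fix k assume k: "k < NN" and nx: "\<forall>x\<in>insert y W. pos x \<noteq> k"
      hence "k \<noteq> pos y" by auto
      thus "fst (A[pos y := Some y], tp(c := tp c - 1)) ! k = A2 ! k" using rest[OF k] nx by simp
    qed
  qed
qed

lemma Inv3_iter: "q \<le> NN \<Longrightarrow> Inv3 (NN - q) (fst (foldl (step3_at Ts) (A2, bend Ts) (rev [NN - q..<NN])))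
   (snd (foldl (step3_at Ts) (A2, bend Ts) (rev [NN - q..<NN])))"
proof (induct q)
  case 0 then show ?case using Inv3_init by simp
next
  case (Suc q)
  have IH: "Inv3 (NN - q) (fst (foldl (step3_at Ts) (A2, bend Ts) (rev [NN - q..<NN])))
     (snd (foldl (step3_at Ts) (A2, bend Ts) (rev [NN - q..<NN])))" using Suc by simp
  have e1: "Suc (NN - Suc q) = NN - q" using Suc(2) by simp
  have lt: "NN - Suc q < NN" using Suc(2) by simp
  have "[NN - Suc q..<NN] = (NN - Suc q) # [NN - q..<NN]" using upt_conv_Cons[OF lt] e1 by simp
  hence r: "rev [NN - Suc q..<NN] = rev [NN - q..<NN] @ [NN - Suc q]" by simp
  have "Inv3 (NN - Suc q) (fst (step3_at Ts (foldl (step3_at Ts) (A2, bend Ts) (rev [NN - q..<NN])) (NN - Suc q)))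
     (snd (step3_at Ts (foldl (step3_at Ts) (A2, bend Ts) (rev [NN - q..<NN])) (NN - Suc q)))"
    using Inv3_step[OF lt, of "fst (foldl (step3_at Ts) (A2, bend Ts) (rev [NN - q..<NN]))"
        "snd (foldl (step3_at Ts) (A2, bend Ts) (rev [NN - q..<NN]))"] IH e1 by simp
  thus ?case unfolding r by simp
qed

abbreviation A3 where "A3 \<equiv> step3 Ts A2"

lemma A3_pos: assumes x: "x \<in> Pos" shows "A3 ! pos x = Some x"
proof -
  have inv: "Inv3 0 A3 (snd (foldl (step3_at Ts) (A2, bend Ts) (rev [0..<NN])))"
    using Inv3_iter[of NN] unfolding step3_def by simp
  have W: "W3 0 = {x \<in> Pos. Sp x}" unfolding W3_def by auto
  have fill0: "\<forall>k<NN. (\<forall>w\<in>W3 0. pos w = k \<longrightarrow> A3 ! k = Some w) \<and> ((\<forall>w\<in>W3 0. pos w \<noteq> k) \<longrightarrow> A3 ! k = A2 ! k)"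
    using inv unfolding Inv3_def by (rule conjunct2[OF conjunct2])
  have h: "(\<forall>w\<in>W3 0. pos w = pos x \<longrightarrow> A3 ! pos x = Some w) \<and> ((\<forall>w\<in>W3 0. pos w \<noteq> pos x) \<longrightarrow> A3 ! pos x = A2 ! pos x)"
    using fill0 pos_N[OF x] by simp
  show ?thesis
  proof (cases "Sp x")
    case True
    have "x \<in> W3 0" unfolding W using x True by simp
    then show ?thesis using conjunct1[OF h] by simp
  next
    case False
    hence lx: "Lp x" using LS[OF x] by simp
    have "\<forall>w\<in>W3 0. pos w \<noteq> pos x"
    proof
      fix w assume w: "w \<in> W3 0"
      show "pos w \<noteq> pos x"
      proof
        assume "pos w = pos x"
        hence "w = x" using pos_inj[of w x] w x unfolding W by simp
        thus False using w False unfolding W by simp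
      qed
    qed
    hence "A3 ! pos x = A2 ! pos x" using conjunct2[OF h] by simp
    also have "\<dots> = Some x" using A2_props(2)[OF x lx] .
    finally show ?thesis .
  qed
qed

lemma A3_nth: assumes k: "k < NN" and e: "A3 ! k = Some x" shows "x \<in> Pos \<and> pos x = k"
proof -
  obtain z where z: "z \<in> Pos" "pos z = k" using pos_surj[OF k] by blast
  have "A3 ! k = Some z" using A3_pos[OF z(1)] z(2) by simp
  thus ?thesis using e z by simp
qed

end



context IS begin

lemma main1: assumes x: "x \<in> Pos" and y: "y \<in> Pos" and l: "lms_less (U x) (U y)" shows "lt x y"
proof -
  define e where "e = (\<lambda>c::'a. (False, c, 0::nat))"
  have kx: "key x = map e (U x) @ [(True, ch (endp x), idx (endp x))]" unfolding key_def e_def ..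
  have ky: "key y = map e (U y) @ [(True, ch (endp y), idx (endp y))]" unfolding key_def e_def ..
  from l consider (a) "strict_prefix (U y) (U x)" | (b) "\<not> prefix (U x) (U y)" "\<not> prefix (U y) (U x)" "ord_class.lexordp (U x) (U y)"
    unfolding lms_less_def by blast
  thus ?thesis
  proof cases
    case a
    then obtain zs where zs: "U x = U y @ zs" "zs \<noteq> []" by (auto simp: strict_prefix_def prefix_def)
    then obtain c r where "zs = c # r" by (cases zs) auto
    hence "key x = map e (U y) @ e c # (map e r @ [(True, ch (endp x), idx (endp x))])" using kx zs by simp
    moreover have "e c < (True, ch (endp y), idx (endp y))" unfolding e_def by simp
    ultimately show ?thesis unfolding lt_def using ky lexordp_append_left_rightI by metis
  next
    case b
    from b(3) have "(\<exists>z vs. U y = U x @ z # vs) \<or> (\<exists>us a b vs ws. a < b \<and> U x = us @ a # vs \<and> U y = us @ b # ws)"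
      by (simp add: lexordp_iff)
    moreover have "\<not> (\<exists>z vs. U y = U x @ z # vs)" using b(1) by (auto simp: prefix_def)
    ultimately obtain us a1 b1 vs ws where h: "a1 < b1" "U x = us @ a1 # vs" "U y = us @ b1 # ws" by blast
    have "key x = map e us @ e a1 # (map e vs @ [(True, ch (endp x), idx (endp x))])" using kx h by simp
    moreover have "key y = map e us @ e b1 # (map e ws @ [(True, ch (endp y), idx (endp y))])" using ky h by simp
    moreover have "e a1 < e b1" unfolding e_def using h(1) by simp
    ultimately show ?thesis unfolding lt_def using lexordp_append_left_rightI by metis
  qed
qed

lemma main2: assumes x: "x \<in> Pos" and y: "y \<in> Pos" and u: "U x = U y"
  shows "lt x y \<longleftrightarrow> idx (endp x) < idx (endp y)"
proof -
  define M where "M = map (\<lambda>c::'a. (False, c, 0::nat)) (U x)"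
  have c: "ch (endp x) = ch (endp y)" using last_U[OF x] last_U[OF y] u by simp
  have kx: "key x = M @ [(True, ch (endp x), idx (endp x))]" unfolding key_def M_def ..
  have ky: "key y = M @ [(True, ch (endp x), idx (endp y))]" unfolding key_def M_def u c ..
  have "lt x y \<longleftrightarrow> ord_class.lexordp [(True, ch (endp x), idx (endp x))] [(True, ch (endp x), idx (endp y))]"
    unfolding lt_def kx ky
    using lexordp_append_leftI[of "[(True, ch (endp x), idx (endp x))]" "[(True, ch (endp x), idx (endp y))]" M]
      lexordp_append_leftD[of M "[(True, ch (endp x), idx (endp x))]" "[(True, ch (endp x), idx (endp y))]"]
    by auto
  also have "\<dots> \<longleftrightarrow> idx (endp x) < idx (endp y)" by simp
  finally show ?thesis .
qed

lemma q_iff: assumes x: "x \<in> Pos" and y: "y \<in> Pos"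
  shows "(\<exists>q1 q2. q1 < q2 \<and> q2 < NN \<and> A1 ! q1 = Some (endp x) \<and> A1 ! q2 = Some (endp y))
    \<longleftrightarrow> idx (endp x) < idx (endp y)"
proof
  assume "\<exists>q1 q2. q1 < q2 \<and> q2 < NN \<and> A1 ! q1 = Some (endp x) \<and> A1 ! q2 = Some (endp y)"
  then obtain q1 q2 where q: "q1 < q2" "q2 < NN" "A1 ! q1 = Some (endp x)" "A1 ! q2 = Some (endp y)" by blast
  have "endp x \<in> set ord \<and> idx (endp x) = q1" using iffD1[OF A1_nth q(3)] q(1,2) by simp
  moreover have "endp y \<in> set ord \<and> idx (endp y) = q2" using iffD1[OF A1_nth q(4)] q(2) by simp
  ultimately show "idx (endp x) < idx (endp y)" using q(1) by simp
next
  assume lt: "idx (endp x) < idx (endp y)"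
  have ex: "endp x \<in> set ord" and ey: "endp y \<in> set ord" using ord_iff endp_M endp_Pos x y by auto
  have N2: "idx (endp y) < NN" using idx_N[OF ey] .
  have N1: "idx (endp x) < NN" using idx_N[OF ex] .
  have "A1 ! idx (endp x) = Some (endp x)" by (rule iffD2[OF A1_nth[OF N1]]) (simp add: ex)
  moreover have "A1 ! idx (endp y) = Some (endp y)" by (rule iffD2[OF A1_nth[OF N2]]) (simp add: ey)
  ultimately show "\<exists>q1 q2. q1 < q2 \<and> q2 < NN \<and> A1 ! q1 = Some (endp x) \<and> A1 ! q2 = Some (endp y)"
    using lt N2 by blast
qed

end

theorem lemma4:
  fixes Ts :: "'a::linorder list list" and ord :: "(nat \<times> nat) list"
    and a b i j :: nat
  assumes prim: "\<forall>T \<in> set Ts. primitive T \<and> length T \<ge> 2"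
    and ab: "a < length Ts" "b < length Ts"
    and ij: "i < length (Ts ! a)" "j < length (Ts ! b)"
    and ord: "distinct ord" "set ord = lms_positions Ts"
  shows "(lms_less (lms_prefix (Ts ! a) i) (lms_prefix (Ts ! b) j) \<longrightarrow>
            (\<forall>k1 k2. k1 < total_len Ts \<and> k2 < total_len Ts \<and>
               induced_sort Ts ord ! k1 = Some (i, a) \<and> induced_sort Ts ord ! k2 = Some (j, b)
               \<longrightarrow> k1 < k2))
       \<and> (lms_prefix (Ts ! a) i = lms_prefix (Ts ! b) j \<longrightarrow>
            (\<forall>k1 k2. k1 < total_len Ts \<and> k2 < total_len Ts \<and>
               induced_sort Ts ord ! k1 = Some (i, a) \<and> induced_sort Ts ord ! k2 = Some (j, b)
               \<longrightarrow> (k1 < k2 \<longleftrightarrow>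
                    (\<exists>q1 q2. q1 < q2 \<and> q2 < total_len Ts \<and>
                       step1 Ts ord ! q1 = Some (lms_end (Ts ! a) i, a) \<and>
                       step1 Ts ord ! q2 = Some (lms_end (Ts ! b) j, b)))))"
proof -
  interpret IS Ts ord using prim ord by unfold_locales auto
  have x: "(i, a) \<in> Pos" and y: "(j, b) \<in> Pos" unfolding Pos_def using ab ij by auto
  have Ux: "lms_prefix (Ts ! a) i = U (i, a)" and Uy: "lms_prefix (Ts ! b) j = U (j, b)" unfolding U_def by simp_all
  have ex: "(lms_end (Ts ! a) i, a) = endp (i, a)" and ey: "(lms_end (Ts ! b) j, b) = endp (j, b)"
    unfolding endp_def by simp_all
  have IS: "induced_sort Ts ord = A3" unfolding induced_sort_def ..
  have kk: "k1 = pos (i, a) \<and> k2 = pos (j, b)"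
    if "k1 < total_len Ts \<and> k2 < total_len Ts \<and> induced_sort Ts ord ! k1 = Some (i, a) \<and> induced_sort Ts ord ! k2 = Some (j, b)"
    for k1 k2 using A3_nth[of k1 "(i, a)"] A3_nth[of k2 "(j, b)"] that unfolding IS by auto
  show ?thesis
  proof (intro conjI impI allI)
    fix k1 k2
    assume l: "lms_less (lms_prefix (Ts ! a) i) (lms_prefix (Ts ! b) j)"
      and h: "k1 < total_len Ts \<and> k2 < total_len Ts \<and> induced_sort Ts ord ! k1 = Some (i, a) \<and> induced_sort Ts ord ! k2 = Some (j, b)"
    have "lt (i, a) (j, b)" using main1[OF x y] l unfolding Ux Uy by simp
    thus "k1 < k2" using kk[OF h] pos_mono[OF x y] by simp
  next
    fix k1 k2
    assume u: "lms_prefix (Ts ! a) i = lms_prefix (Ts ! b) j"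
      and h: "k1 < total_len Ts \<and> k2 < total_len Ts \<and> induced_sort Ts ord ! k1 = Some (i, a) \<and> induced_sort Ts ord ! k2 = Some (j, b)"
    have "k1 < k2 \<longleftrightarrow> lt (i, a) (j, b)" using kk[OF h] pos_iff[OF x y] by simp
    also have "\<dots> \<longleftrightarrow> idx (endp (i, a)) < idx (endp (j, b))" using main2[OF x y] u unfolding Ux Uy by simp
    also have "\<dots> \<longleftrightarrow> (\<exists>q1 q2. q1 < q2 \<and> q2 < total_len Ts \<and>
                       step1 Ts ord ! q1 = Some (lms_end (Ts ! a) i, a) \<and>
                       step1 Ts ord ! q2 = Some (lms_end (Ts ! b) j, b))"
      unfolding ex ey using q_iff[OF x y] by simp
    finally show "k1 < k2 \<longleftrightarrow> (\<exists>q1 q2. q1 < q2 \<and> q2 < total_len Ts \<and>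
                       step1 Ts ord ! q1 = Some (lms_end (Ts ! a) i, a) \<and>
                       step1 Ts ord ! q2 = Some (lms_end (Ts ! b) j, b))" .
  qed
qed



end
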